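(* Let $\mathfrak{g}$ be a finite-dimensional Leibniz algebra with finite-dimensional Schur $\mathrm{Lie}$-multiplier, and let $0\to\mathfrak{m}_i\to\mathfrak{p}_i\xrightarrow{\psi_i}\mathfrak{g}\to0$, $i=1,2$, be two $\mathrm{Lie}$-stem covers of $\mathfrak{g}$. Then $Z_{\mathrm{Lie}}(\mathfrak{p}_1)/\mathfrak{m}_1\cong Z_{\mathrm{Lie}}(\mathfrak{p}_2)/\mathfrak{m}_2$.
   Context: Fix a field $\mathbb{K}$ with $\frac12\in\mathbb{K}$. A Leibniz algebra is a $\mathbb{K}$-vector space with a bilinear bracket satisfying $[x,[y,z]]=[[x,y],z]-[[x,z],y]$. $\mathfrak{p}^{\mathrm{ann}}$ is the span of all $[x,x]$, $\mathfrak{p}_{\mathrm{Lie}}=\mathfrak{p}/\mathfrak{p}^{\mathrm{ann}}$. $[\mathfrak{m},\mathfrak{n}]_{\mathrm{Lie}}$ is the span of all $[m,n]+[n,m]$. $Z_{\mathrm{Lie}}(\mathfrak{p})=\{z:[x,z]+[z,x]=0\ \forall x\in\mathfrak{p}\}$. For a free presentation $0\to\mathfrak{r}\to\mathfrak{f}\to\mathfrak{g}\to0$ ($\mathfrak{f}$ free Leibniz), the Schur $\mathrm{Lie}$-multiplier is $\mathcal{M}^{\mathrm{Lie}}(\mathfrak{g})=\frac{\mathfrak{r}\cap[\mathfrak{f},\mathfrak{f}]_{\mathrm{Lie}}}{[\mathfrak{f},\mathfrak{r}]_{\mathrm{Lie}}}$. An extension $0\to\mathfrak{m}\to\mathfrak{p}\to\mathfrak{g}\to0$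 is a $\mathrm{Lie}$-stem cover if $\mathfrak{m}\subseteq Z_{\mathrm{Lie}}(\mathfrak{p})$, the induced map $\mathfrak{p}_{\mathrm{Lie}}\to\mathfrak{g}_{\mathrm{Lie}}$ is an isomorphism, and the induced map $\mathcal{M}^{\mathrm{Lie}}(\mathfrak{p})\to\mathcal{M}^{\mathrm{Lie}}(\mathfrak{g})$ is zero. *)

theory Defs
  imports Main
begin

record ('k, 'a) lalg =
  lcar :: "'a set"
  lzero :: 'a
  ladd :: "'a \<Rightarrow> 'a \<Rightarrow> 'a"
  lsmult :: "'k \<Rightarrow> 'a \<Rightarrow> 'a"
  lbr :: "'a \<Rightarrow> 'a \<Rightarrow> 'a"

definition vspace :: "('k::field, 'a, 'z) lalg_scheme \<Rightarrow> bool" where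
  "vspace A \<longleftrightarrow>
     lzero A \<in> lcar A \<and>
     (\<forall>x\<in>lcar A. \<forall>y\<in>lcar A. ladd A x y \<in> lcar A) \<and>
     (\<forall>c. \<forall>x\<in>lcar A. lsmult A c x \<in> lcar A) \<and>
     (\<forall>x\<in>lcar A. \<forall>y\<in>lcar A. \<forall>z\<in>lcar A. ladd A (ladd A x y) z = ladd A x (ladd A y z)) \<and>
     (\<forall>x\<in>lcar A. \<forall>y\<in>lcar A. ladd A x y = ladd A y x) \<and>
     (\<forall>x\<in>lcar A. ladd A (lzero A) x = x) \<and>
     (\<forall>x\<in>lcar A. ladd A x (lsmult A (-1) x) = lzero A) \<and>
     (\<forall>c. \<forall>x\<in>lcar A. \<forall>y\<in>lcar A. lsmult A c (ladd A x y) = ladd A (lsmult A c x) (lsmult A c y)) \<and>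
     (\<forall>c d. \<forall>x\<in>lcar A. lsmult A (c + d) x = ladd A (lsmult A c x) (lsmult A d x)) \<and>
     (\<forall>c d. \<forall>x\<in>lcar A. lsmult A c (lsmult A d x) = lsmult A (c * d) x) \<and>
     (\<forall>x\<in>lcar A. lsmult A 1 x = x)"

definition leibniz :: "('k::field, 'a, 'z) lalg_scheme \<Rightarrow> bool" where
  "leibniz A \<longleftrightarrow> vspace A \<and>
     (\<forall>x\<in>lcar A. \<forall>y\<in>lcar A. lbr A x y \<in> lcar A) \<and>
     (\<forall>x\<in>lcar A. \<forall>y\<in>lcar A. \<forall>z\<in>lcar A. lbr A (ladd A x y) z = ladd A (lbr A x z) (lbr A y z)) \<and>
     (\<forall>x\<in>lcar A. \<forall>y\<in>lcar A. \<forall>z\<in>lcar A. lbr A x (ladd A y z) = ladd A (lbr A x y) (lbr A x z)) \<and>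
     (\<forall>c. \<forall>x\<in>lcar A. \<forall>y\<in>lcar A. lbr A (lsmult A c x) y = lsmult A c (lbr A x y)) \<and>
     (\<forall>c. \<forall>x\<in>lcar A. \<forall>y\<in>lcar A. lbr A x (lsmult A c y) = lsmult A c (lbr A x y)) \<and>
     (\<forall>x\<in>lcar A. \<forall>y\<in>lcar A. \<forall>z\<in>lcar A.
        lbr A x (lbr A y z) = ladd A (lbr A (lbr A x y) z) (lsmult A (-1) (lbr A (lbr A x z) y)))"

definition subspace :: "('k::field, 'a, 'z) lalg_scheme \<Rightarrow> 'a set \<Rightarrow> bool" where
  "subspace A S \<longleftrightarrow> S \<subseteq> lcar A \<and> lzero A \<in> S \<and>
     (\<forall>x\<in>S. \<forall>y\<in>S. ladd A x y \<in> S) \<and> (\<forall>c. \<forall>x\<in>S. lsmult A c x \<in> S)"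

definition lspan :: "('k::field, 'a, 'z) lalg_scheme \<Rightarrow> 'a set \<Rightarrow> 'a set" where
  "lspan A S = lcar A \<inter> \<Inter> {T. subspace A T \<and> S \<inter> lcar A \<subseteq> T}"

definition ideal :: "('k::field, 'a, 'z) lalg_scheme \<Rightarrow> 'a set \<Rightarrow> bool" where
  "ideal A I \<longleftrightarrow> subspace A I \<and>
     (\<forall>x\<in>lcar A. \<forall>i\<in>I. lbr A x i \<in> I \<and> lbr A i x \<in> I)"

definition ideal_gen :: "('k::field, 'a, 'z) lalg_scheme \<Rightarrow> 'a set \<Rightarrow> 'a set" where
  "ideal_gen A S = lcar A \<inter> \<Inter> {I. ideal A I \<and> S \<inter> lcar A \<subseteq> I}"

definition fin_dim :: "('k::field, 'a, 'z) lalg_scheme \<Rightarrow> bool" where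
  "fin_dim A \<longleftrightarrow> (\<exists>S. finite S \<and> S \<subseteq> lcar A \<and> lspan A S = lcar A)"

definition coset :: "('k, 'a, 'z) lalg_scheme \<Rightarrow> 'a set \<Rightarrow> 'a \<Rightarrow> 'a set" where
  "coset A I a = (\<lambda>i. ladd A a i) ` I"

definition qrep :: "('k, 'a, 'z) lalg_scheme \<Rightarrow> 'a set \<Rightarrow> 'a set \<Rightarrow> 'a" where
  "qrep A I X = (SOME a. a \<in> lcar A \<and> X = coset A I a)"

definition quot :: "('k, 'a, 'z) lalg_scheme \<Rightarrow> 'a set \<Rightarrow> ('k, 'a set) lalg" where
  "quot A I = \<lparr> lcar = coset A I ` lcar A,
                lzero = coset A I (lzero A),
                ladd = (\<lambda>X Y. coset A I (ladd A (qrep A I X) (qrep A I Y))),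
                lsmult = (\<lambda>c X. coset A I (lsmult A c (qrep A I X))),
                lbr = (\<lambda>X Y. coset A I (lbr A (qrep A I X) (qrep A I Y))) \<rparr>"

definition restr :: "('k, 'a) lalg \<Rightarrow> 'a set \<Rightarrow> ('k, 'a) lalg" where
  "restr A S = A\<lparr>lcar := S\<rparr>"

definition hom :: "('k, 'a) lalg \<Rightarrow> ('k, 'b) lalg \<Rightarrow> ('a \<Rightarrow> 'b) \<Rightarrow> bool" where
  "hom A B h \<longleftrightarrow> h ` lcar A \<subseteq> lcar B \<and>
     (\<forall>x\<in>lcar A. \<forall>y\<in>lcar A. h (ladd A x y) = ladd B (h x) (h y)) \<and>
     (\<forall>c. \<forall>x\<in>lcar A. h (lsmult A c x) = lsmult B c (h x)) \<and>
     (\<forall>x\<in>lcar A. \<forall>y\<in>lcar A. h (lbr A x y) = lbr B (h x) (h y))"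

definition iso :: "('k, 'a) lalg \<Rightarrow> ('k, 'b) lalg \<Rightarrow> ('a \<Rightarrow> 'b) \<Rightarrow> bool" where
  "iso A B h \<longleftrightarrow> hom A B h \<and> bij_betw h (lcar A) (lcar B)"

definition isomorphic :: "('k, 'a) lalg \<Rightarrow> ('k, 'b) lalg \<Rightarrow> bool" where
  "isomorphic A B \<longleftrightarrow> (\<exists>h. iso A B h)"

definition kerh :: "('k, 'a) lalg \<Rightarrow> ('k, 'b) lalg \<Rightarrow> ('a \<Rightarrow> 'b) \<Rightarrow> 'a set" where
  "kerh A B h = {x \<in> lcar A. h x = lzero B}"

definition ann :: "('k::field, 'a) lalg \<Rightarrow> 'a set" where
  "ann A = lspan A {lbr A x x | x. x \<in> lcar A}"

definition brLie :: "('k::field, 'a) lalg \<Rightarrow> 'a set \<Rightarrow> 'a set \<Rightarrow> 'a set" where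
  "brLie A M N = lspan A {ladd A (lbr A m n) (lbr A n m) | m n. m \<in> M \<and> n \<in> N}"

definition ZLie :: "('k::field, 'a) lalg \<Rightarrow> 'a set" where
  "ZLie A = {z \<in> lcar A. \<forall>x\<in>lcar A. ladd A (lbr A x z) (lbr A z x) = lzero A}"

definition lie_part :: "('k::field, 'a) lalg \<Rightarrow> ('k, 'a set) lalg" where
  "lie_part A = quot A (ann A)"

definition liemap :: "('k::field, 'a) lalg \<Rightarrow> ('k, 'b) lalg \<Rightarrow> ('a \<Rightarrow> 'b) \<Rightarrow> 'a set \<Rightarrow> 'b set" where
  "liemap A B h X = coset B (ann B) (h (qrep A (ann A) X))"

section \<open>Free Leibniz algebras (free magma algebra modulo the Leibniz identities)\<close>

datatype 'x tr = Lf 'x | Nd "'x tr" "'x tr"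

text \<open>Free non-associative algebra on X: finitely supported K-combinations of binary trees
  with leaves in X; bracket is grafting.\<close>
definition mag :: "'x set \<Rightarrow> ('k::field, 'x tr \<Rightarrow> 'k) lalg" where
  "mag X = \<lparr> lcar = {f. finite {t. f t \<noteq> 0} \<and> (\<forall>t. f t \<noteq> 0 \<longrightarrow> set_tr t \<subseteq> X)},
             lzero = (\<lambda>t. 0),
             ladd = (\<lambda>f g t. f t + g t),
             lsmult = (\<lambda>c f t. c * f t),
             lbr = (\<lambda>f g t. case t of Lf x \<Rightarrow> 0 | Nd l r \<Rightarrow> f l * g r) \<rparr>"

definition leib_rel :: "'x set \<Rightarrow> ('x tr \<Rightarrow> 'k::field) set" where
  "leib_rel X = {ladd (mag X) (lbr (mag X) a (lbr (mag X) b c))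
                   (lsmult (mag X) (-1)
                     (ladd (mag X) (lbr (mag X) (lbr (mag X) a b) c)
                        (lsmult (mag X) (-1) (lbr (mag X) (lbr (mag X) a c) b))))
                 | a b c. a \<in> lcar (mag X) \<and> b \<in> lcar (mag X) \<and> c \<in> lcar (mag X)}"

definition FLI :: "'x set \<Rightarrow> ('x tr \<Rightarrow> 'k::field) set" where
  "FLI X = ideal_gen (mag X) (leib_rel X)"

definition FL :: "'x set \<Rightarrow> ('k::field, ('x tr \<Rightarrow> 'k) set) lalg" where
  "FL X = quot (mag X) (FLI X)"

fun tr_ev :: "('k, 'a) lalg \<Rightarrow> 'a tr \<Rightarrow> 'a" where
  "tr_ev A (Lf x) = x"
| "tr_ev A (Nd l r) = lbr A (tr_ev A l) (tr_ev A r)"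

fun lsum_list :: "('k, 'a) lalg \<Rightarrow> 'a list \<Rightarrow> 'a" where
  "lsum_list A [] = lzero A"
| "lsum_list A (x # xs) = ladd A x (lsum_list A xs)"

text \<open>Linear extension of tree evaluation to the free magma algebra.\<close>
definition mag_ev :: "('k::field, 'a) lalg \<Rightarrow> ('a tr \<Rightarrow> 'k) \<Rightarrow> 'a" where
  "mag_ev A f = lsum_list A (map (\<lambda>t. lsmult A (f t) (tr_ev A t))
                   (SOME xs. distinct xs \<and> set xs = {t. f t \<noteq> 0}))"

definition proj :: "('k::field, 'a) lalg \<Rightarrow> ('a tr \<Rightarrow> 'k) set \<Rightarrow> 'a" where
  "proj A X = mag_ev A (qrep (mag (lcar A)) (FLI (lcar A)) X)"

definition rel :: "('k::field, 'a) lalg \<Rightarrow> ('a tr \<Rightarrow> 'k) set set" where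
  "rel A = kerh (FL (lcar A)) A (proj A)"

definition Mult :: "('k::field, 'a) lalg \<Rightarrow> ('k, ('a tr \<Rightarrow> 'k) set set) lalg" where
  "Mult A = (let F = FL (lcar A) in
     quot (restr F (rel A \<inter> brLie F (lcar F) (lcar F))) (brLie F (lcar F) (rel A)))"

definition magmap :: "('a \<Rightarrow> 'b) \<Rightarrow> ('a tr \<Rightarrow> 'k::field) \<Rightarrow> ('b tr \<Rightarrow> 'k)" where
  "magmap h f = (\<lambda>t. sum f {s. f s \<noteq> 0 \<and> map_tr h s = t})"

definition Fmap :: "('k::field, 'a) lalg \<Rightarrow> ('k, 'b) lalg \<Rightarrow> ('a \<Rightarrow> 'b)
                      \<Rightarrow> ('a tr \<Rightarrow> 'k) set \<Rightarrow> ('b tr \<Rightarrow> 'k) set" where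
  "Fmap A B h X = coset (mag (lcar B)) (FLI (lcar B))
                     (magmap h (qrep (mag (lcar A)) (FLI (lcar A)) X))"

definition Mmap :: "('k::field, 'a) lalg \<Rightarrow> ('k, 'b) lalg \<Rightarrow> ('a \<Rightarrow> 'b)
                      \<Rightarrow> ('a tr \<Rightarrow> 'k) set set \<Rightarrow> ('b tr \<Rightarrow> 'k) set set" where
  "Mmap A B h Y = (let FA = FL (lcar A); FB = FL (lcar B) in
     coset FB (brLie FB (lcar FB) (rel B))
       (Fmap A B h (qrep (restr FA (rel A \<inter> brLie FA (lcar FA) (lcar FA)))
                         (brLie FA (lcar FA) (rel A)) Y)))"

text \<open>The extension 0 \<rightarrow> ker \<psi> \<rightarrow> P \<rightarrow> G \<rightarrow> 0 given by a surjective homomorphism \<psi>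
  (m is identified with ker \<psi>).\<close>
definition lie_stem_cover :: "('k::field, 'a) lalg \<Rightarrow> ('k, 'b) lalg \<Rightarrow> ('a \<Rightarrow> 'b) \<Rightarrow> bool" where
  "lie_stem_cover P G \<psi> \<longleftrightarrow>
     leibniz P \<and> leibniz G \<and> hom P G \<psi> \<and> \<psi> ` lcar P = lcar G \<and>
     kerh P G \<psi> \<subseteq> ZLie P \<and>
     iso (lie_part P) (lie_part G) (liemap P G \<psi>) \<and>
     (\<forall>Y\<in>lcar (Mult P). Mmap P G \<psi> Y = lzero (Mult G))"

end

theory Submission
  imports Defs
begin


section \<open>Vector space basics\<close>

context
  fixes A :: "('k::field, 'a) lalg"
  assumes vs: "vspace A"
begin

lemma vs_zero: "lzero A \<in> lcar A"
  using vs unfolding vspace_def by (elim conjE) assumption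
lemma vs_add_ax: "\<forall>x\<in>lcar A. \<forall>y\<in>lcar A. ladd A x y \<in> lcar A"
  using vs unfolding vspace_def by (elim conjE) assumption
lemma vs_add: "x \<in> lcar A \<Longrightarrow> y \<in> lcar A \<Longrightarrow> ladd A x y \<in> lcar A"
  by (rule vs_add_ax[rule_format])
lemma vs_smult_ax: "\<forall>c. \<forall>x\<in>lcar A. lsmult A c x \<in> lcar A"
  using vs unfolding vspace_def by (elim conjE) assumption
lemma vs_smult: "x \<in> lcar A \<Longrightarrow> lsmult A c x \<in> lcar A"
  by (rule vs_smult_ax[rule_format])
lemma vs_assoc_ax: "\<forall>x\<in>lcar A. \<forall>y\<in>lcar A. \<forall>z\<in>lcar A. ladd A (ladd A x y) z = ladd A x (ladd A y z)"
  using vs unfolding vspace_def by (elim conjE) assumption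
lemma vs_assoc: "x \<in> lcar A \<Longrightarrow> y \<in> lcar A \<Longrightarrow> z \<in> lcar A \<Longrightarrow>
   ladd A (ladd A x y) z = ladd A x (ladd A y z)"
  by (rule vs_assoc_ax[rule_format])
lemma vs_comm_ax: "\<forall>x\<in>lcar A. \<forall>y\<in>lcar A. ladd A x y = ladd A y x"
  using vs unfolding vspace_def by (elim conjE) assumption
lemma vs_comm: "x \<in> lcar A \<Longrightarrow> y \<in> lcar A \<Longrightarrow> ladd A x y = ladd A y x"
  by (rule vs_comm_ax[rule_format])
lemma vs_zero_l_ax: "\<forall>x\<in>lcar A. ladd A (lzero A) x = x"
  using vs unfolding vspace_def by (elim conjE) assumption
lemma vs_zero_l: "x \<in> lcar A \<Longrightarrow> ladd A (lzero A) x = x"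
  by (rule vs_zero_l_ax[rule_format])
lemma vs_neg_ax: "\<forall>x\<in>lcar A. ladd A x (lsmult A (-1) x) = lzero A"
  using vs unfolding vspace_def by (elim conjE) assumption
lemma vs_neg: "x \<in> lcar A \<Longrightarrow> ladd A x (lsmult A (-1) x) = lzero A"
  by (rule vs_neg_ax[rule_format])
lemma vs_dist1_ax: "\<forall>c. \<forall>x\<in>lcar A. \<forall>y\<in>lcar A. lsmult A c (ladd A x y) = ladd A (lsmult A c x) (lsmult A c y)"
  using vs unfolding vspace_def by (elim conjE) assumption
lemma vs_dist1: "x \<in> lcar A \<Longrightarrow> y \<in> lcar A \<Longrightarrow>
   lsmult A c (ladd A x y) = ladd A (lsmult A c x) (lsmult A c y)"
  by (rule vs_dist1_ax[rule_format])
lemma vs_dist2_ax: "\<forall>c. \<forall>d. \<forall>x\<in>lcar A. lsmult A (c + d) x = ladd A (lsmult A c x) (lsmult A d x)"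
  using vs unfolding vspace_def by (elim conjE) assumption
lemma vs_dist2: "x \<in> lcar A \<Longrightarrow> lsmult A (c + d) x = ladd A (lsmult A c x) (lsmult A d x)"
  by (rule vs_dist2_ax[rule_format])
lemma vs_sassoc_ax: "\<forall>c. \<forall>d. \<forall>x\<in>lcar A. lsmult A c (lsmult A d x) = lsmult A (c * d) x"
  using vs unfolding vspace_def by (elim conjE) assumption
lemma vs_sassoc: "x \<in> lcar A \<Longrightarrow> lsmult A c (lsmult A d x) = lsmult A (c * d) x"
  by (rule vs_sassoc_ax[rule_format])
lemma vs_one_ax: "\<forall>x\<in>lcar A. lsmult A 1 x = x"
  using vs unfolding vspace_def by (elim conjE) assumption
lemma vs_one: "x \<in> lcar A \<Longrightarrow> lsmult A 1 x = x"
  by (rule vs_one_ax[rule_format])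

lemma vs_zero_r: "x \<in> lcar A \<Longrightarrow> ladd A x (lzero A) = x"
proof -
  assume a: "x \<in> lcar A"
  have "ladd A x (lzero A) = ladd A (lzero A) x" by (rule vs_comm[OF a vs_zero])
  also have "\<dots> = x" by (rule vs_zero_l[OF a])
  finally show ?thesis .
qed

lemma vs_lcomm: "x \<in> lcar A \<Longrightarrow> y \<in> lcar A \<Longrightarrow> z \<in> lcar A \<Longrightarrow>
   ladd A x (ladd A y z) = ladd A y (ladd A x z)"
proof -
  assume a: "x \<in> lcar A" "y \<in> lcar A" "z \<in> lcar A"
  have "ladd A x (ladd A y z) = ladd A (ladd A x y) z" using a vs_assoc by simp
  also have "\<dots> = ladd A (ladd A y x) z" by (subst vs_comm[OF a(1) a(2)]) (rule refl)
  also have "\<dots> = ladd A y (ladd A x z)" using a vs_assoc by simp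
  finally show ?thesis .
qed

lemma vs_neg_cancel: "x \<in> lcar A \<Longrightarrow> y \<in> lcar A \<Longrightarrow>
   ladd A (lsmult A (-1) x) (ladd A x y) = y"
proof -
  assume a: "x \<in> lcar A" "y \<in> lcar A"
  have m: "lsmult A (-1) x \<in> lcar A" using a vs_smult by simp
  have "ladd A (lsmult A (-1) x) (ladd A x y) = ladd A (ladd A (lsmult A (-1) x) x) y"
    using a m vs_assoc by simp
  also have "\<dots> = ladd A (ladd A x (lsmult A (-1) x)) y" by (subst vs_comm[OF m a(1)]) (rule refl)
  also have "\<dots> = y" using a vs_neg vs_zero_l by simp
  finally show ?thesis .
qed

lemma vs_cancel: "x \<in> lcar A \<Longrightarrow> y \<in> lcar A \<Longrightarrow> z \<in> lcar A \<Longrightarrow>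
   ladd A x y = ladd A x z \<Longrightarrow> y = z"
proof -
  assume a: "x \<in> lcar A" "y \<in> lcar A" "z \<in> lcar A" "ladd A x y = ladd A x z"
  have "y = ladd A (lsmult A (-1) x) (ladd A x y)" by (rule vs_neg_cancel[OF a(1) a(2), symmetric])
  also have "\<dots> = ladd A (lsmult A (-1) x) (ladd A x z)" by (simp only: a(4))
  also have "\<dots> = z" by (rule vs_neg_cancel[OF a(1) a(3)])
  finally show ?thesis .
qed

lemma vs_self_eq_zero: "x \<in> lcar A \<Longrightarrow> ladd A x x = x \<Longrightarrow> x = lzero A"
proof -
  assume a: "x \<in> lcar A" "ladd A x x = x"
  have "ladd A x x = ladd A x (lzero A)" unfolding a(2) vs_zero_r[OF a(1)] by (rule refl)
  then show ?thesis by (rule vs_cancel[OF a(1) a(1) vs_zero])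
qed

lemma vs_smult_0: "x \<in> lcar A \<Longrightarrow> lsmult A 0 x = lzero A"
proof -
  assume a: "x \<in> lcar A"
  have "ladd A (lsmult A 0 x) (lsmult A 0 x) = lsmult A 0 x"
    using vs_dist2[OF a, of 0 0] unfolding add_0_left by (rule sym)
  then show ?thesis by (rule vs_self_eq_zero[OF vs_smult[OF a, of 0]])
qed

lemma vs_smult_zero: "lsmult A c (lzero A) = lzero A"
proof -
  have "ladd A (lsmult A c (lzero A)) (lsmult A c (lzero A)) = lsmult A c (lzero A)"
    using vs_dist1[OF vs_zero vs_zero, of c] unfolding vs_zero_r[OF vs_zero] by (rule sym)
  then show ?thesis by (rule vs_self_eq_zero[OF vs_smult[OF vs_zero, of c]])
qed

lemma vs_sub_eq: "x \<in> lcar A \<Longrightarrow> y \<in> lcar A \<Longrightarrow>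
   ladd A y (ladd A x (lsmult A (-1) y)) = x"
proof -
  assume a: "x \<in> lcar A" "y \<in> lcar A"
  have m: "lsmult A (-1) y \<in> lcar A" using a vs_smult by simp
  have "ladd A y (ladd A x (lsmult A (-1) y)) = ladd A x (ladd A y (lsmult A (-1) y))"
    by (rule vs_lcomm[OF a(2) a(1) m])
  also have "\<dots> = x" using a vs_neg vs_zero_r by simp
  finally show ?thesis .
qed

lemma vs_sub_zero: "x \<in> lcar A \<Longrightarrow> y \<in> lcar A \<Longrightarrow>
   ladd A x (lsmult A (-1) y) = lzero A \<Longrightarrow> x = y"
proof -
  assume a: "x \<in> lcar A" "y \<in> lcar A" "ladd A x (lsmult A (-1) y) = lzero A"
  have "x = ladd A y (ladd A x (lsmult A (-1) y))" by (rule vs_sub_eq[OF a(1) a(2), symmetric])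
  also have "\<dots> = y" unfolding a(3) by (rule vs_zero_r[OF a(2)])
  finally show ?thesis .
qed

lemma vs_swap4: "a \<in> lcar A \<Longrightarrow> b \<in> lcar A \<Longrightarrow> c \<in> lcar A \<Longrightarrow> d \<in> lcar A \<Longrightarrow>
   ladd A (ladd A a b) (ladd A c d) = ladd A (ladd A a c) (ladd A b d)"
proof -
  assume a: "a \<in> lcar A" "b \<in> lcar A" "c \<in> lcar A" "d \<in> lcar A"
  have "ladd A (ladd A a b) (ladd A c d) = ladd A a (ladd A b (ladd A c d))"
    using a vs_assoc vs_add by simp
  also have "\<dots> = ladd A a (ladd A c (ladd A b d))" by (rule arg_cong[OF vs_lcomm[OF a(2) a(3) a(4)]])
  also have "\<dots> = ladd A (ladd A a c) (ladd A b d)" using a vs_assoc vs_add by simp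
  finally show ?thesis .
qed

lemma lsum_closed: "set xs \<subseteq> lcar A \<Longrightarrow> lsum_list A xs \<in> lcar A"
  by (induction xs) (auto simp: vs_zero vs_add)

lemma lsum_mid: "set (y1 @ x # y2) \<subseteq> lcar A \<Longrightarrow>
   lsum_list A (y1 @ x # y2) = ladd A x (lsum_list A (y1 @ y2))"
proof (induction y1)
  case Nil then show ?case by simp
next
  case (Cons a y1)
  have c: "lsum_list A (y1 @ y2) \<in> lcar A" "a \<in> lcar A" "x \<in> lcar A"
    using Cons.prems lsum_closed[of "y1 @ y2"] by auto
  have "lsum_list A ((a # y1) @ x # y2) = ladd A a (ladd A x (lsum_list A (y1 @ y2)))"
    using Cons by simp
  also have "\<dots> = ladd A x (ladd A a (lsum_list A (y1 @ y2)))" by (rule vs_lcomm[OF c(2) c(3) c(1)])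
  finally show ?case by simp
qed

lemma lsum_perm: "set xs \<subseteq> lcar A \<Longrightarrow> distinct xs \<Longrightarrow> distinct ys \<Longrightarrow> set xs = set ys \<Longrightarrow>
   lsum_list A xs = lsum_list A ys"
proof (induction xs arbitrary: ys)
  case Nil then show ?case by simp
next
  case (Cons x xs)
  have "x \<in> set ys" using Cons.prems by auto
  then obtain y1 y2 where ys: "ys = y1 @ x # y2" by (metis split_list)
  have sy: "set ys \<subseteq> lcar A" using Cons.prems by auto
  have "set xs = set (y1 @ y2)" using Cons.prems ys by auto
  moreover have "distinct (y1 @ y2)" using Cons.prems ys by auto
  ultimately have "lsum_list A xs = lsum_list A (y1 @ y2)" using Cons by simp
  then show ?case using lsum_mid[of y1 x y2] sy ys by simp
qed

lemma lsum_filter: "\<forall>t\<in>set L. g t \<in> lcar A \<Longrightarrow> \<forall>t\<in>set L. \<not> P t \<longrightarrow> g t = lzero A \<Longrightarrow>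
   lsum_list A (map g L) = lsum_list A (map g (filter P L))"
proof (induction L)
  case Nil then show ?case by simp
next
  case (Cons a L)
  have c: "lsum_list A (map g (filter P L)) \<in> lcar A"
    using Cons.prems by (intro lsum_closed) auto
  show ?case
  proof (cases "P a")
    case True then show ?thesis using Cons by simp
  next
    case False then show ?thesis using Cons vs_zero_l[OF c] by simp
  qed
qed

lemma lsum_add: "\<forall>t\<in>set L. g t \<in> lcar A \<Longrightarrow> \<forall>t\<in>set L. h t \<in> lcar A \<Longrightarrow>
   lsum_list A (map (\<lambda>t. ladd A (g t) (h t)) L) = ladd A (lsum_list A (map g L)) (lsum_list A (map h L))"
proof (induction L)
  case Nil then show ?case by (simp add: vs_zero_l vs_zero)
next
  case (Cons a L)
  have "set (map g L) \<subseteq> lcar A" "set (map h L) \<subseteq> lcar A" using Cons.prems by auto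
  then have c: "lsum_list A (map g L) \<in> lcar A" "lsum_list A (map h L) \<in> lcar A"
    using lsum_closed by auto
  have ga: "g a \<in> lcar A" "h a \<in> lcar A" using Cons.prems by auto
  have "lsum_list A (map (\<lambda>t. ladd A (g t) (h t)) (a # L))
      = ladd A (ladd A (g a) (h a)) (ladd A (lsum_list A (map g L)) (lsum_list A (map h L)))"
    using Cons by simp
  also have "\<dots> = ladd A (ladd A (g a) (lsum_list A (map g L))) (ladd A (h a) (lsum_list A (map h L)))"
    by (rule vs_swap4) (use c ga in auto)
  finally show ?case by simp
qed

lemma lsum_smult: "\<forall>t\<in>set L. g t \<in> lcar A \<Longrightarrow>
   lsum_list A (map (\<lambda>t. lsmult A c (g t)) L) = lsmult A c (lsum_list A (map g L))"
proof (induction L)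
  case Nil then show ?case by (simp add: vs_smult_zero)
next
  case (Cons a L)
  have "set (map g L) \<subseteq> lcar A" using Cons.prems by auto
  then show ?case using Cons by (simp add: vs_dist1 lsum_closed)
qed

end

context
  fixes A :: "('k::field, 'a) lalg"
  assumes lb: "leibniz A"
begin

lemma lb_vs: "vspace A"
  using lb unfolding leibniz_def by (elim conjE) assumption
lemma lb_br_ax: "\<forall>x\<in>lcar A. \<forall>y\<in>lcar A. lbr A x y \<in> lcar A"
  using lb unfolding leibniz_def by (elim conjE) assumption
lemma lb_br: "x \<in> lcar A \<Longrightarrow> y \<in> lcar A \<Longrightarrow> lbr A x y \<in> lcar A"
  by (rule lb_br_ax[rule_format])
lemma lb_addl_ax: "\<forall>x\<in>lcar A. \<forall>y\<in>lcar A. \<forall>z\<in>lcar A. lbr A (ladd A x y) z = ladd A (lbr A x z) (lbr A y z)"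
  using lb unfolding leibniz_def by (elim conjE) assumption
lemma lb_addl: "x \<in> lcar A \<Longrightarrow> y \<in> lcar A \<Longrightarrow> z \<in> lcar A \<Longrightarrow>
   lbr A (ladd A x y) z = ladd A (lbr A x z) (lbr A y z)"
  by (rule lb_addl_ax[rule_format])
lemma lb_addr_ax: "\<forall>x\<in>lcar A. \<forall>y\<in>lcar A. \<forall>z\<in>lcar A. lbr A x (ladd A y z) = ladd A (lbr A x y) (lbr A x z)"
  using lb unfolding leibniz_def by (elim conjE) assumption
lemma lb_addr: "x \<in> lcar A \<Longrightarrow> y \<in> lcar A \<Longrightarrow> z \<in> lcar A \<Longrightarrow>
   lbr A x (ladd A y z) = ladd A (lbr A x y) (lbr A x z)"
  by (rule lb_addr_ax[rule_format])
lemma lb_sml_ax: "\<forall>c. \<forall>x\<in>lcar A. \<forall>y\<in>lcar A. lbr A (lsmult A c x) y = lsmult A c (lbr A x y)"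
  using lb unfolding leibniz_def by (elim conjE) assumption
lemma lb_sml: "x \<in> lcar A \<Longrightarrow> y \<in> lcar A \<Longrightarrow> lbr A (lsmult A c x) y = lsmult A c (lbr A x y)"
  by (rule lb_sml_ax[rule_format])
lemma lb_smr_ax: "\<forall>c. \<forall>x\<in>lcar A. \<forall>y\<in>lcar A. lbr A x (lsmult A c y) = lsmult A c (lbr A x y)"
  using lb unfolding leibniz_def by (elim conjE) assumption
lemma lb_smr: "x \<in> lcar A \<Longrightarrow> y \<in> lcar A \<Longrightarrow> lbr A x (lsmult A c y) = lsmult A c (lbr A x y)"
  by (rule lb_smr_ax[rule_format])
lemma lb_id_ax: "\<forall>x\<in>lcar A. \<forall>y\<in>lcar A. \<forall>z\<in>lcar A. lbr A x (lbr A y z) = ladd A (lbr A (lbr A x y) z) (lsmult A (-1) (lbr A (lbr A x z) y))"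
  using lb unfolding leibniz_def by (elim conjE) assumption
lemma lb_id: "x \<in> lcar A \<Longrightarrow> y \<in> lcar A \<Longrightarrow> z \<in> lcar A \<Longrightarrow>
   lbr A x (lbr A y z) = ladd A (lbr A (lbr A x y) z) (lsmult A (-1) (lbr A (lbr A x z) y))"
  by (rule lb_id_ax[rule_format])

lemma lb_zero_l: "x \<in> lcar A \<Longrightarrow> lbr A (lzero A) x = lzero A"
proof -
  assume x: "x \<in> lcar A"
  have z: "lzero A \<in> lcar A" by (rule vs_zero[OF lb_vs])
  have "lbr A (lzero A) x = lbr A (lsmult A 0 (lzero A)) x" using vs_smult_0[OF lb_vs z] by simp
  also have "\<dots> = lsmult A 0 (lbr A (lzero A) x)" by (rule lb_sml[OF z x])
  also have "\<dots> = lzero A" by (rule vs_smult_0[OF lb_vs lb_br[OF z x]])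
  finally show ?thesis .
qed
lemma lb_zero_r: "x \<in> lcar A \<Longrightarrow> lbr A x (lzero A) = lzero A"
proof -
  assume x: "x \<in> lcar A"
  have z: "lzero A \<in> lcar A" by (rule vs_zero[OF lb_vs])
  have "lbr A x (lzero A) = lbr A x (lsmult A 0 (lzero A))" using vs_smult_0[OF lb_vs z] by simp
  also have "\<dots> = lsmult A 0 (lbr A x (lzero A))" by (rule lb_smr[OF x z])
  also have "\<dots> = lzero A" by (rule vs_smult_0[OF lb_vs lb_br[OF x z]])
  finally show ?thesis .
qed

lemma zlie_add: "a \<in> ZLie A \<Longrightarrow> b \<in> ZLie A \<Longrightarrow> ladd A a b \<in> ZLie A"
proof -
  assume a: "a \<in> ZLie A" and b: "b \<in> ZLie A"
  have vs: "vspace A" by (rule lb_vs)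
  have ac: "a \<in> lcar A" "b \<in> lcar A" using a b unfolding ZLie_def by auto
  show ?thesis unfolding ZLie_def
  proof (intro CollectI conjI ballI)
    show "ladd A a b \<in> lcar A" using ac vs_add[OF vs] by blast
    fix x assume x: "x \<in> lcar A"
    have "ladd A (lbr A x (ladd A a b)) (lbr A (ladd A a b) x)
        = ladd A (ladd A (lbr A x a) (lbr A x b)) (ladd A (lbr A a x) (lbr A b x))"
      using ac x by (simp add: lb_addl lb_addr)
    also have "\<dots> = ladd A (ladd A (lbr A x a) (lbr A a x)) (ladd A (lbr A x b) (lbr A b x))"
      by (rule vs_swap4[OF vs]) (use ac x in \<open>simp_all add: lb_br\<close>)
    also have "\<dots> = lzero A" using a b x unfolding ZLie_def by (simp add: vs_zero_l[OF vs] vs_zero[OF vs])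
    finally show "ladd A (lbr A x (ladd A a b)) (lbr A (ladd A a b) x) = lzero A" .
  qed
qed

end

lemma hom_car: "hom A B h \<Longrightarrow> x \<in> lcar A \<Longrightarrow> h x \<in> lcar B"
  unfolding hom_def by blast
lemma hom_add: "hom A B h \<Longrightarrow> x \<in> lcar A \<Longrightarrow> y \<in> lcar A \<Longrightarrow> h (ladd A x y) = ladd B (h x) (h y)"
  unfolding hom_def by blast
lemma hom_smult: "hom A B h \<Longrightarrow> x \<in> lcar A \<Longrightarrow> h (lsmult A c x) = lsmult B c (h x)"
  unfolding hom_def by blast
lemma hom_br: "hom A B h \<Longrightarrow> x \<in> lcar A \<Longrightarrow> y \<in> lcar A \<Longrightarrow> h (lbr A x y) = lbr B (h x) (h y)"
  unfolding hom_def by blast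
lemma hom_zero: "vspace A \<Longrightarrow> vspace B \<Longrightarrow> hom A B h \<Longrightarrow> h (lzero A) = lzero B"
proof -
  assume vA: "vspace A" and vB: "vspace B" and h: "hom A B h"
  have z: "lzero A \<in> lcar A" by (rule vs_zero[OF vA])
  have "h (lzero A) = h (lsmult A 0 (lzero A))" using vs_smult_0[OF vA z] by simp
  also have "\<dots> = lsmult B 0 (h (lzero A))" by (rule hom_smult[OF h z])
  also have "\<dots> = lzero B" by (rule vs_smult_0[OF vB hom_car[OF h z]])
  finally show ?thesis .
qed

lemma coset_psi:
  assumes vA: "vspace A" and vB: "vspace B" and h: "hom A B h"
    and a: "a \<in> lcar A" and b: "b \<in> lcar A"
  shows "coset A (kerh A B h) a = coset A (kerh A B h) b \<longleftrightarrow> h a = h b"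
proof
  assume eq: "coset A (kerh A B h) a = coset A (kerh A B h) b"
  have "lzero A \<in> kerh A B h" using hom_zero[OF vA vB h] vs_zero[OF vA] unfolding kerh_def by auto
  then have "a \<in> coset A (kerh A B h) a" using vs_zero_r[OF vA a] unfolding coset_def by force
  then obtain i where i: "i \<in> kerh A B h" "a = ladd A b i" using eq unfolding coset_def by auto
  then show "h a = h b" using hom_add[OF h b] vs_zero_r[OF vB hom_car[OF h b]] unfolding kerh_def by auto
next
  assume eq: "h a = h b"
  have gen: "coset A (kerh A B h) x \<subseteq> coset A (kerh A B h) y"
    if x: "x \<in> lcar A" and y: "y \<in> lcar A" and hxy: "h x = h y" for x y
  proof
    fix z assume "z \<in> coset A (kerh A B h) x"
    then obtain i where i: "i \<in> kerh A B h" "z = ladd A x i" unfolding coset_def by auto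
    have ic: "i \<in> lcar A" and hi: "h i = lzero B" using i unfolding kerh_def by auto
    define j where "j = ladd A (ladd A x (lsmult A (-1) y)) i"
    have jc: "j \<in> lcar A" unfolding j_def using x y ic by (simp add: vs_add[OF vA] vs_smult[OF vA])
    have ym: "lsmult A (-1) y \<in> lcar A" using y vs_smult[OF vA] by blast
    have xy: "ladd A x (lsmult A (-1) y) \<in> lcar A" using x ym vs_add[OF vA] by blast
    have "h j = ladd B (h (ladd A x (lsmult A (-1) y))) (h i)" unfolding j_def
      using hom_add[OF h xy ic] .
    also have "\<dots> = ladd B (ladd B (h x) (lsmult B (-1) (h y))) (lzero B)"
      using hom_add[OF h x ym] hom_smult[OF h y] hi by simp
    also have "\<dots> = lzero B" using hxy vs_neg[OF vB hom_car[OF h y]] vs_zero_r[OF vB vs_zero[OF vB]] by simp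
    finally have "h j = lzero B" .
    then have "j \<in> kerh A B h" using jc unfolding kerh_def by auto
    moreover have "z = ladd A y j"
    proof -
      have "ladd A y j = ladd A (ladd A y (ladd A x (lsmult A (-1) y))) i"
        unfolding j_def using vs_assoc[OF vA y xy ic] by simp
      also have "\<dots> = ladd A x i" using vs_sub_eq[OF vA x y] by simp
      finally show ?thesis using i(2) by simp
    qed
    ultimately show "z \<in> coset A (kerh A B h) y" unfolding coset_def by auto
  qed
  show "coset A (kerh A B h) a = coset A (kerh A B h) b"
    using gen[OF a b eq] gen[OF b a eq[symmetric]] by blast
qed


section \<open>Concrete magma algebra\<close>

definition madd :: "('x \<Rightarrow> 'k::field) \<Rightarrow> ('x \<Rightarrow> 'k) \<Rightarrow> ('x \<Rightarrow> 'k)" where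
  "madd f g = (\<lambda>t. f t + g t)"
definition msm :: "'k::field \<Rightarrow> ('x \<Rightarrow> 'k) \<Rightarrow> ('x \<Rightarrow> 'k)" where
  "msm c f = (\<lambda>t. c * f t)"
definition mbr :: "('x tr \<Rightarrow> 'k::field) \<Rightarrow> ('x tr \<Rightarrow> 'k) \<Rightarrow> ('x tr \<Rightarrow> 'k)" where
  "mbr f g = (\<lambda>t. case t of Lf x \<Rightarrow> 0 | Nd l r \<Rightarrow> f l * g r)"
definition cdl :: "'k::field \<Rightarrow> 'x \<Rightarrow> ('x \<Rightarrow> 'k)" where
  "cdl c t = (\<lambda>s. if s = t then c else 0)"
definition supp :: "('x \<Rightarrow> 'k::field) \<Rightarrow> 'x set" where
  "supp f = {t. f t \<noteq> 0}"

lemma mag_simps[simp]: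
  "lzero (mag X) = (\<lambda>t. 0)" "ladd (mag X) = madd" "lsmult (mag X) = msm" "lbr (mag X) = mbr"
  unfolding mag_def madd_def msm_def mbr_def by (auto simp: fun_eq_iff)

lemma mag_car: "f \<in> lcar (mag X) \<longleftrightarrow> finite (supp f) \<and> (\<forall>t\<in>supp f. set_tr t \<subseteq> X)"
  unfolding mag_def supp_def by auto

lemma supp_madd: "supp (madd f g) \<subseteq> supp f \<union> supp g"
  unfolding supp_def madd_def by auto
lemma supp_msm: "supp (msm c f) \<subseteq> supp f"
  unfolding supp_def msm_def by auto
lemma supp_mbr: "supp (mbr f g) \<subseteq> (\<lambda>(l, r). Nd l r) ` (supp f \<times> supp g)"
proof
  fix t assume "t \<in> supp (mbr f g)"
  then show "t \<in> (\<lambda>(l, r). Nd l r) ` (supp f \<times> supp g)"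
    unfolding supp_def mbr_def by (cases t) auto
qed
lemma supp_cdl: "supp (cdl c t) \<subseteq> {t}" unfolding supp_def cdl_def by auto
lemma supp_zero: "supp (\<lambda>t. 0) = {}" unfolding supp_def by auto

lemma mag_zero: "(\<lambda>t. 0) \<in> lcar (mag X)" unfolding mag_car supp_zero by auto
lemma mag_add: "f \<in> lcar (mag X) \<Longrightarrow> g \<in> lcar (mag X) \<Longrightarrow> madd f g \<in> lcar (mag X)"
  unfolding mag_car using supp_madd[of f g] by (meson UnE finite_UnI finite_subset subsetD)
lemma mag_smult: "f \<in> lcar (mag X) \<Longrightarrow> msm c f \<in> lcar (mag X)"
  unfolding mag_car using supp_msm[of c f] by (meson finite_subset subsetD)
lemma mag_br: "f \<in> lcar (mag X) \<Longrightarrow> g \<in> lcar (mag X) \<Longrightarrow> mbr f g \<in> lcar (mag X)"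
proof -
  assume f: "f \<in> lcar (mag X)" and g: "g \<in> lcar (mag X)"
  have "finite ((\<lambda>(l, r). Nd l r) ` (supp f \<times> supp g))" using f g unfolding mag_car by auto
  then have "finite (supp (mbr f g))" using supp_mbr finite_subset by blast
  moreover have "\<forall>t\<in>supp (mbr f g). set_tr t \<subseteq> X"
    using supp_mbr[of f g] f g unfolding mag_car by fastforce
  ultimately show ?thesis unfolding mag_car by blast
qed
lemma mag_cdl: "set_tr t \<subseteq> X \<Longrightarrow> cdl c t \<in> lcar (mag X)"
proof -
  assume a: "set_tr t \<subseteq> X"
  have s: "supp (cdl c t) \<subseteq> {t}" by (rule supp_cdl)
  then have "finite (supp (cdl c t))" using finite_subset by blast
  moreover have "\<forall>s\<in>supp (cdl c t). set_tr s \<subseteq> X" using s a by auto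
  ultimately show ?thesis unfolding mag_car by blast
qed

lemma madd_comm: "madd f g = madd g f" unfolding madd_def by (auto simp: fun_eq_iff)
lemma madd_zero: "madd (\<lambda>t. 0) f = f" "madd f (\<lambda>t. 0) = f" unfolding madd_def by auto
lemma mbr_addl: "mbr (madd f g) h = madd (mbr f h) (mbr g h)"
  unfolding mbr_def madd_def by (auto simp: fun_eq_iff distrib_right split: tr.split)
lemma mbr_addr: "mbr h (madd f g) = madd (mbr h f) (mbr h g)"
  unfolding mbr_def madd_def by (auto simp: fun_eq_iff distrib_left split: tr.split)
lemma mbr_zero: "mbr (\<lambda>t. 0) f = (\<lambda>t. 0)" "mbr f (\<lambda>t. 0) = (\<lambda>t. 0)"
  unfolding mbr_def by (auto simp: fun_eq_iff split: tr.split)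
lemma mbr_cdl: "mbr (cdl c a) (cdl d b) = cdl (c * d) (Nd a b)"
  unfolding mbr_def cdl_def by (auto simp: fun_eq_iff split: tr.split)
lemma cdl_zero: "cdl 0 t = (\<lambda>s. 0)" unfolding cdl_def by auto

lemma lspan_car: "lspan A S \<subseteq> lcar A" unfolding lspan_def by auto
lemma lspan_gen: "x \<in> S \<Longrightarrow> x \<in> lcar A \<Longrightarrow> x \<in> lspan A S" unfolding lspan_def by auto
lemma lspan_min: "subspace A T \<Longrightarrow> S \<inter> lcar A \<subseteq> T \<Longrightarrow> lspan A S \<subseteq> T"
  unfolding lspan_def by auto
lemma lspan_add: "x \<in> lspan A S \<Longrightarrow> y \<in> lspan A S \<Longrightarrow> ladd A x y \<in> lcar A \<Longrightarrow> ladd A x y \<in> lspan A S"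
  unfolding lspan_def subspace_def by auto
lemma lspan_smult: "x \<in> lspan A S \<Longrightarrow> lsmult A c x \<in> lcar A \<Longrightarrow> lsmult A c x \<in> lspan A S"
  unfolding lspan_def subspace_def by auto
lemma lspan_zero: "lzero A \<in> lcar A \<Longrightarrow> lzero A \<in> lspan A S"
  unfolding lspan_def subspace_def by auto

lemma ideal_Inter:
  assumes F: "\<And>I. I \<in> F \<Longrightarrow> ideal A I" and ne: "J \<in> F"
  shows "ideal A (\<Inter>F)"
proof -
  have sub: "\<And>I. I \<in> F \<Longrightarrow> I \<subseteq> lcar A" using F unfolding ideal_def subspace_def by blast
  have z: "\<And>I. I \<in> F \<Longrightarrow> lzero A \<in> I" using F unfolding ideal_def subspace_def by blast
  have ad: "\<And>I x y. I \<in> F \<Longrightarrow> x \<in> I \<Longrightarrow> y \<in> I \<Longrightarrow> ladd A x y \<in> I"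
    using F unfolding ideal_def subspace_def by blast
  have sm: "\<And>I x c. I \<in> F \<Longrightarrow> x \<in> I \<Longrightarrow> lsmult A c x \<in> I"
    using F unfolding ideal_def subspace_def by blast
  have br: "\<And>I x i. I \<in> F \<Longrightarrow> x \<in> lcar A \<Longrightarrow> i \<in> I \<Longrightarrow> lbr A x i \<in> I \<and> lbr A i x \<in> I"
    using F unfolding ideal_def by blast
  have "\<Inter>F \<subseteq> lcar A" using sub ne by blast
  moreover have "lzero A \<in> \<Inter>F" using z by blast
  moreover have "\<forall>x\<in>\<Inter>F. \<forall>y\<in>\<Inter>F. ladd A x y \<in> \<Inter>F" using ad by blast
  moreover have "\<forall>c. \<forall>x\<in>\<Inter>F. lsmult A c x \<in> \<Inter>F" using sm by blast
  moreover have "\<forall>x\<in>lcar A. \<forall>i\<in>\<Inter>F. lbr A x i \<in> \<Inter>F \<and> lbr A i x \<in> \<Inter>F" using br by blast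
  ultimately show ?thesis unfolding ideal_def subspace_def by blast
qed

lemma ideal_gen_ideal: "ideal A (lcar A) \<Longrightarrow> ideal A (ideal_gen A S)"
proof -
  assume a: "ideal A (lcar A)"
  let ?F = "{I. ideal A I \<and> S \<inter> lcar A \<subseteq> I}"
  have "lcar A \<in> ?F" using a by blast
  then have "ideal A (\<Inter>?F)" by (intro ideal_Inter) auto
  moreover have "ideal_gen A S = \<Inter>?F" unfolding ideal_gen_def using \<open>lcar A \<in> ?F\<close> by blast
  ultimately show ?thesis by simp
qed
lemma ideal_gen_gen: "x \<in> S \<Longrightarrow> x \<in> lcar A \<Longrightarrow> x \<in> ideal_gen A S"
  unfolding ideal_gen_def by auto
lemma ideal_gen_min: "ideal A I \<Longrightarrow> S \<inter> lcar A \<subseteq> I \<Longrightarrow> ideal_gen A S \<subseteq> I"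
  unfolding ideal_gen_def by auto

lemma mag_ideal: "ideal (mag X) (lcar (mag X))"
  unfolding ideal_def subspace_def using mag_zero mag_add mag_smult mag_br by auto

lemma FLI_ideal: "ideal (mag X) (FLI X)"
  unfolding FLI_def by (rule ideal_gen_ideal[OF mag_ideal])

lemma FLI_car: "f \<in> FLI X \<Longrightarrow> f \<in> lcar (mag X)"
  using FLI_ideal[of X] unfolding ideal_def subspace_def by auto
lemma FLI_zero: "(\<lambda>t. 0) \<in> FLI X"
  using FLI_ideal[of X] unfolding ideal_def subspace_def by auto
lemma FLI_add: "f \<in> FLI X \<Longrightarrow> g \<in> FLI X \<Longrightarrow> madd f g \<in> FLI X"
  using FLI_ideal[of X] unfolding ideal_def subspace_def by auto
lemma FLI_smult: "f \<in> FLI X \<Longrightarrow> msm c f \<in> FLI X"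
  using FLI_ideal[of X] unfolding ideal_def subspace_def by auto
lemma FLI_brl: "x \<in> lcar (mag X) \<Longrightarrow> f \<in> FLI X \<Longrightarrow> mbr f x \<in> FLI X"
  using FLI_ideal[of X] unfolding ideal_def by auto
lemma FLI_brr: "x \<in> lcar (mag X) \<Longrightarrow> f \<in> FLI X \<Longrightarrow> mbr x f \<in> FLI X"
  using FLI_ideal[of X] unfolding ideal_def by auto

lemma FLI_diff: "f \<in> FLI X \<Longrightarrow> g \<in> FLI X \<Longrightarrow> (\<lambda>t. f t - g t) \<in> FLI X"
proof -
  assume "f \<in> FLI X" "g \<in> FLI X"
  then have "madd f (msm (-1) g) \<in> FLI X" by (simp add: FLI_add FLI_smult)
  moreover have "madd f (msm (-1) g) = (\<lambda>t. f t - g t)" unfolding madd_def msm_def by auto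
  ultimately show ?thesis by simp
qed

abbreviation cs :: "'x set \<Rightarrow> ('x tr \<Rightarrow> 'k::field) \<Rightarrow> ('x tr \<Rightarrow> 'k) set" where
  "cs X f \<equiv> coset (mag X) (FLI X) f"

lemma cs_unfold: "cs X f = (\<lambda>i. madd f i) ` FLI X" unfolding coset_def by simp

lemma cs_eq:
  assumes f: "f \<in> lcar (mag X)" and g: "g \<in> lcar (mag X)"
  shows "cs X f = cs X g \<longleftrightarrow> (\<lambda>t. f t - g t) \<in> FLI X"
proof
  assume eq: "cs X f = cs X g"
  have "f \<in> cs X f" unfolding cs_unfold using FLI_zero madd_zero(2)[of f] by (metis image_eqI)
  then obtain i where i: "i \<in> FLI X" "f = madd g i" using eq unfolding cs_unfold by auto
  then have "(\<lambda>t. f t - g t) = i" unfolding madd_def by auto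
  then show "(\<lambda>t. f t - g t) \<in> FLI X" using i by simp
next
  assume d: "(\<lambda>t. f t - g t) \<in> FLI X"
  have d2: "(\<lambda>t. g t - f t) \<in> FLI X"
    using FLI_diff[OF FLI_zero d] by simp
  show "cs X f = cs X g"
  proof
    show "cs X f \<subseteq> cs X g"
    proof
      fix z assume "z \<in> cs X f"
      then obtain i where i: "i \<in> FLI X" "z = madd f i" unfolding cs_unfold by auto
      have "z = madd g (madd (\<lambda>t. f t - g t) i)" using i unfolding madd_def by auto
      then show "z \<in> cs X g" using FLI_add[OF d i(1)] unfolding cs_unfold by auto
    qed
    show "cs X g \<subseteq> cs X f"
    proof
      fix z assume "z \<in> cs X g"
      then obtain i where i: "i \<in> FLI X" "z = madd g i" unfolding cs_unfold by auto
      have "z = madd f (madd (\<lambda>t. g t - f t) i)" using i unfolding madd_def by auto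
      then show "z \<in> cs X f" using FLI_add[OF d2 i(1)] unfolding cs_unfold by auto
    qed
  qed
qed

lemma cs_eqI: "f \<in> lcar (mag X) \<Longrightarrow> g \<in> lcar (mag X) \<Longrightarrow> (\<lambda>t. f t - g t) \<in> FLI X \<Longrightarrow> cs X f = cs X g"
  using cs_eq by blast

lemma FL_car: "lcar (FL X) = cs X ` lcar (mag X)"
  unfolding FL_def quot_def by simp

lemma qrep_cs:
  assumes f: "f \<in> lcar (mag X)"
  shows "qrep (mag X) (FLI X) (cs X f) \<in> lcar (mag X) \<and>
         cs X (qrep (mag X) (FLI X) (cs X f)) = cs X f"
  unfolding qrep_def by (rule someI[of "\<lambda>a. a \<in> lcar (mag X) \<and> cs X f = cs X a" f, THEN conjE]) (use f in auto)

lemma qrep_cs_diff: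
  assumes f: "f \<in> lcar (mag X)"
  shows "(\<lambda>t. qrep (mag X) (FLI X) (cs X f) t - f t) \<in> FLI X"
  using qrep_cs[OF f] cs_eq[of "qrep (mag X) (FLI X) (cs X f)" X f] f by auto

lemma FL_zero: "lzero (FL X) = cs X (\<lambda>t. 0)"
  unfolding FL_def quot_def by simp

lemma FL_add:
  assumes f: "f \<in> lcar (mag X)" and g: "g \<in> lcar (mag X)"
  shows "ladd (FL X) (cs X f) (cs X g) = cs X (madd f g)"
proof -
  let ?q = "qrep (mag X) (FLI X)"
  have "ladd (FL X) (cs X f) (cs X g) = cs X (madd (?q (cs X f)) (?q (cs X g)))"
    unfolding FL_def quot_def by simp
  also have "\<dots> = cs X (madd f g)"
  proof (rule cs_eqI)
    show "madd (?q (cs X f)) (?q (cs X g)) \<in> lcar (mag X)" using qrep_cs[OF f] qrep_cs[OF g] by (intro mag_add) auto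
    show "madd f g \<in> lcar (mag X)" using f g by (rule mag_add)
    have "madd (\<lambda>t. ?q (cs X f) t - f t) (\<lambda>t. ?q (cs X g) t - g t) \<in> FLI X"
      by (intro FLI_add qrep_cs_diff f g)
    then show "(\<lambda>t. madd (?q (cs X f)) (?q (cs X g)) t - madd f g t) \<in> FLI X"
      unfolding madd_def by (simp add: algebra_simps)
  qed
  finally show ?thesis .
qed

lemma FL_smult:
  assumes f: "f \<in> lcar (mag X)"
  shows "lsmult (FL X) c (cs X f) = cs X (msm c f)"
proof -
  let ?q = "qrep (mag X) (FLI X)"
  have "lsmult (FL X) c (cs X f) = cs X (msm c (?q (cs X f)))"
    unfolding FL_def quot_def by simp
  also have "\<dots> = cs X (msm c f)"
  proof (rule cs_eqI)
    show "msm c (?q (cs X f)) \<in> lcar (mag X)" using qrep_cs[OF f] by (intro mag_smult) auto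
    show "msm c f \<in> lcar (mag X)" using f by (rule mag_smult)
    have "msm c (\<lambda>t. ?q (cs X f) t - f t) \<in> FLI X"
      by (intro FLI_smult qrep_cs_diff f)
    then show "(\<lambda>t. msm c (?q (cs X f)) t - msm c f t) \<in> FLI X"
      unfolding msm_def by (simp add: algebra_simps)
  qed
  finally show ?thesis .
qed

lemma FL_br:
  assumes f: "f \<in> lcar (mag X)" and g: "g \<in> lcar (mag X)"
  shows "lbr (FL X) (cs X f) (cs X g) = cs X (mbr f g)"
proof -
  let ?q = "qrep (mag X) (FLI X)"
  let ?f = "?q (cs X f)" and ?g = "?q (cs X g)"
  have qf: "?f \<in> lcar (mag X)" and qg: "?g \<in> lcar (mag X)" using qrep_cs[OF f] qrep_cs[OF g] by auto
  have "lbr (FL X) (cs X f) (cs X g) = cs X (mbr ?f ?g)"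
    unfolding FL_def quot_def by simp
  also have "\<dots> = cs X (mbr f g)"
  proof (rule cs_eqI)
    show "mbr ?f ?g \<in> lcar (mag X)" using qf qg by (rule mag_br)
    show "mbr f g \<in> lcar (mag X)" using f g by (rule mag_br)
    have "madd (mbr (\<lambda>t. ?f t - f t) ?g) (mbr f (\<lambda>t. ?g t - g t)) \<in> FLI X"
      by (intro FLI_add FLI_brl FLI_brr qrep_cs_diff f g qg)
    moreover have "madd (mbr (\<lambda>t. ?f t - f t) ?g) (mbr f (\<lambda>t. ?g t - g t))
        = (\<lambda>t. mbr ?f ?g t - mbr f g t)"
      unfolding madd_def mbr_def by (auto simp: fun_eq_iff algebra_simps split: tr.split)
    ultimately show "(\<lambda>t. mbr ?f ?g t - mbr f g t) \<in> FLI X" by simp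
  qed
  finally show ?thesis .
qed

lemma FL_elem: "W \<in> lcar (FL X) \<Longrightarrow> \<exists>f\<in>lcar (mag X). W = cs X f"
  unfolding FL_car by auto

lemma FL_zero_car: "lzero (FL X) \<in> lcar (FL X)"
  unfolding FL_zero FL_car using mag_zero by blast
lemma FL_add_car: "W \<in> lcar (FL X) \<Longrightarrow> V \<in> lcar (FL X) \<Longrightarrow> ladd (FL X) W V \<in> lcar (FL X)"
proof -
  assume "W \<in> lcar (FL X)" "V \<in> lcar (FL X)"
  then obtain f g where f: "f \<in> lcar (mag X)" "W = cs X f" and g: "g \<in> lcar (mag X)" "V = cs X g"
    using FL_elem by metis
  show ?thesis unfolding f(2) g(2) FL_add[OF f(1) g(1)] FL_car using mag_add[OF f(1) g(1)] by (rule imageI)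
qed
lemma FL_smult_car: "W \<in> lcar (FL X) \<Longrightarrow> lsmult (FL X) c W \<in> lcar (FL X)"
proof -
  assume "W \<in> lcar (FL X)"
  then obtain f where f: "f \<in> lcar (mag X)" "W = cs X f" using FL_elem by metis
  show ?thesis unfolding f(2) FL_smult[OF f(1)] FL_car using mag_smult[OF f(1)] by (rule imageI)
qed
lemma FL_br_car: "W \<in> lcar (FL X) \<Longrightarrow> V \<in> lcar (FL X) \<Longrightarrow> lbr (FL X) W V \<in> lcar (FL X)"
proof -
  assume "W \<in> lcar (FL X)" "V \<in> lcar (FL X)"
  then obtain f g where f: "f \<in> lcar (mag X)" "W = cs X f" and g: "g \<in> lcar (mag X)" "V = cs X g"
    using FL_elem by metis
  show ?thesis unfolding f(2) g(2) FL_br[OF f(1) g(1)] FL_car using mag_br[OF f(1) g(1)] by (rule imageI)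
qed


section \<open>Evaluation of the free magma algebra\<close>

lemma lsum_perm_map:
  assumes vs: "vspace A"
  shows "\<forall>t\<in>set L. g t \<in> lcar A \<Longrightarrow> distinct L \<Longrightarrow> distinct L' \<Longrightarrow> set L = set L' \<Longrightarrow>
   lsum_list A (map g L) = lsum_list A (map g L')"
proof (induction L arbitrary: L')
  case Nil then show ?case by simp
next
  case (Cons x L)
  have "x \<in> set L'" using Cons.prems by auto
  then obtain y1 y2 where ys: "L' = y1 @ x # y2" by (metis split_list)
  have sy: "set (map g L') \<subseteq> lcar A" using Cons.prems by auto
  have "lsum_list A (map g L) = lsum_list A (map g (y1 @ y2))"
    by (rule Cons.IH) (use Cons.prems ys in auto)
  then show ?case using lsum_mid[OF vs, of "map g y1" "g x" "map g y2"] sy ys by simp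
qed

lemma tr_ev_car: "leibniz A \<Longrightarrow> set_tr t \<subseteq> lcar A \<Longrightarrow> tr_ev A t \<in> lcar A"
  by (induction t) (auto simp: lb_br)

lemma mag_ev_list:
  assumes lb: "leibniz A" and f: "f \<in> lcar (mag (lcar A))"
    and L: "distinct L" "supp f \<subseteq> set L" "\<forall>t\<in>set L. set_tr t \<subseteq> lcar A"
  shows "mag_ev A f = lsum_list A (map (\<lambda>t. lsmult A (f t) (tr_ev A t)) L)"
proof -
  have vs: "vspace A" by (rule lb_vs[OF lb])
  define g where "g = (\<lambda>t. lsmult A (f t) (tr_ev A t))"
  have fin: "finite (supp f)" using f unfolding mag_car by blast
  obtain L0 where L0: "distinct L0" "set L0 = supp f" using finite_distinct_list[OF fin] by blast
  let ?L0 = "SOME xs. distinct xs \<and> set xs = {t. f t \<noteq> 0}"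
  have S: "distinct ?L0 \<and> set ?L0 = supp f"
    by (rule someI[of "\<lambda>xs. distinct xs \<and> set xs = {t. f t \<noteq> 0}" L0, THEN conjE])
       (use L0 in \<open>auto simp: supp_def\<close>)
  have gc: "\<forall>t\<in>set L. g t \<in> lcar A" unfolding g_def using L(3) tr_ev_car[OF lb] vs_smult[OF vs] by blast
  have "lsum_list A (map g L) = lsum_list A (map g (filter (\<lambda>t. f t \<noteq> 0) L))"
    by (rule lsum_filter[OF vs gc]) (auto simp: g_def vs_smult_0[OF vs] tr_ev_car[OF lb] L(3))
  also have "\<dots> = lsum_list A (map g ?L0)"
  proof (rule lsum_perm_map[OF vs])
    show "\<forall>t\<in>set (filter (\<lambda>t. f t \<noteq> 0) L). g t \<in> lcar A" using gc by auto
    show "distinct (filter (\<lambda>t. f t \<noteq> 0) L)" using L(1) by simp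
    show "distinct ?L0" using S by blast
    show "set (filter (\<lambda>t. f t \<noteq> 0) L) = set ?L0" using S L(2) unfolding supp_def by auto
  qed
  finally show ?thesis unfolding mag_ev_def g_def by simp
qed

lemma mag_ev_car:
  assumes lb: "leibniz A" and f: "f \<in> lcar (mag (lcar A))"
  shows "mag_ev A f \<in> lcar A"
proof -
  have fin: "finite (supp f)" using f unfolding mag_car by blast
  obtain L where L: "distinct L" "set L = supp f" using finite_distinct_list[OF fin] by blast
  have Lt: "\<forall>t\<in>set L. set_tr t \<subseteq> lcar A" using L f unfolding mag_car by blast
  have "\<forall>t\<in>set L. lsmult A (f t) (tr_ev A t) \<in> lcar A"
    using Lt tr_ev_car[OF lb] vs_smult[OF lb_vs[OF lb]] by blast
  then have "lsum_list A (map (\<lambda>t. lsmult A (f t) (tr_ev A t)) L) \<in> lcar A"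
    by (intro lsum_closed[OF lb_vs[OF lb]]) auto
  then show ?thesis using mag_ev_list[OF lb f L(1) _ Lt] L by simp
qed

lemma mag_ev_zero: "leibniz A \<Longrightarrow> mag_ev A (\<lambda>t. 0) = lzero A"
  using mag_ev_list[of A "\<lambda>t. 0" "[]"] mag_zero[of "lcar A"] supp_zero by simp

lemma mag_ev_add:
  assumes lb: "leibniz A" and f: "f \<in> lcar (mag (lcar A))" and g: "g \<in> lcar (mag (lcar A))"
  shows "mag_ev A (madd f g) = ladd A (mag_ev A f) (mag_ev A g)"
proof -
  have vs: "vspace A" by (rule lb_vs[OF lb])
  have fin: "finite (supp f \<union> supp g)" using f g unfolding mag_car by blast
  obtain L where L: "distinct L" "set L = supp f \<union> supp g" using finite_distinct_list[OF fin] by blast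
  have Lt: "\<forall>t\<in>set L. set_tr t \<subseteq> lcar A" using L f g unfolding mag_car by blast
  have ev: "\<forall>t\<in>set L. tr_ev A t \<in> lcar A" using Lt tr_ev_car[OF lb] by blast
  have "mag_ev A (madd f g) = lsum_list A (map (\<lambda>t. lsmult A (madd f g t) (tr_ev A t)) L)"
    using mag_ev_list[OF lb mag_add[OF f g] L(1) _ Lt] supp_madd[of f g] L(2) by simp
  also have "\<dots> = lsum_list A (map (\<lambda>t. ladd A (lsmult A (f t) (tr_ev A t)) (lsmult A (g t) (tr_ev A t))) L)"
    using ev by (intro arg_cong[where f="lsum_list A"] map_cong) (auto simp: madd_def vs_dist2[OF vs])
  also have "\<dots> = ladd A (lsum_list A (map (\<lambda>t. lsmult A (f t) (tr_ev A t)) L))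
                         (lsum_list A (map (\<lambda>t. lsmult A (g t) (tr_ev A t)) L))"
    by (rule lsum_add[OF vs]) (use ev vs_smult[OF vs] in auto)
  also have "\<dots> = ladd A (mag_ev A f) (mag_ev A g)"
    using mag_ev_list[OF lb f L(1) _ Lt] mag_ev_list[OF lb g L(1) _ Lt] L(2) by simp
  finally show ?thesis .
qed

lemma mag_ev_smult:
  assumes lb: "leibniz A" and f: "f \<in> lcar (mag (lcar A))"
  shows "mag_ev A (msm c f) = lsmult A c (mag_ev A f)"
proof -
  have vs: "vspace A" by (rule lb_vs[OF lb])
  have fin: "finite (supp f)" using f unfolding mag_car by blast
  obtain L where L: "distinct L" "set L = supp f" using finite_distinct_list[OF fin] by blast
  have Lt: "\<forall>t\<in>set L. set_tr t \<subseteq> lcar A" using L f unfolding mag_car by blast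
  have ev: "\<forall>t\<in>set L. tr_ev A t \<in> lcar A" using Lt tr_ev_car[OF lb] by blast
  have "mag_ev A (msm c f) = lsum_list A (map (\<lambda>t. lsmult A (msm c f t) (tr_ev A t)) L)"
    using mag_ev_list[OF lb mag_smult[OF f] L(1) _ Lt] supp_msm[of c f] L(2) by simp
  also have "\<dots> = lsum_list A (map (\<lambda>t. lsmult A c (lsmult A (f t) (tr_ev A t))) L)"
    using ev by (intro arg_cong[where f="lsum_list A"] map_cong) (auto simp: msm_def vs_sassoc[OF vs])
  also have "\<dots> = lsmult A c (lsum_list A (map (\<lambda>t. lsmult A (f t) (tr_ev A t)) L))"
    by (rule lsum_smult[OF vs]) (use ev vs_smult[OF vs] in auto)
  also have "\<dots> = lsmult A c (mag_ev A f)"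
    using mag_ev_list[OF lb f L(1) _ Lt] L(2) by simp
  finally show ?thesis .
qed

lemma mag_ev_cdl:
  assumes lb: "leibniz A" and t: "set_tr t \<subseteq> lcar A"
  shows "mag_ev A (cdl c t) = lsmult A c (tr_ev A t)"
proof -
  have vs: "vspace A" by (rule lb_vs[OF lb])
  have "mag_ev A (cdl c t) = lsum_list A (map (\<lambda>s. lsmult A (cdl c t s) (tr_ev A s)) [t])"
    using mag_ev_list[OF lb mag_cdl[OF t] _ _, of "[t]"] supp_cdl[of c t] t by simp
  also have "\<dots> = lsmult A c (tr_ev A t)"
    using vs_zero_r[OF vs vs_smult[OF vs tr_ev_car[OF lb t]]] by (simp add: cdl_def)
  finally show ?thesis .
qed

lemma mag_eq:
  fixes f :: "'x tr \<Rightarrow> 'k::field" and \<Phi> \<Psi> :: "('x tr \<Rightarrow> 'k) \<Rightarrow> 'b"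
  assumes f: "f \<in> lcar (mag X)"
    and z: "\<Phi> (\<lambda>t. 0) = \<Psi> (\<lambda>t. 0)"
    and aP: "\<And>f g. f \<in> lcar (mag X) \<Longrightarrow> g \<in> lcar (mag X) \<Longrightarrow> \<Phi> (madd f g) = add (\<Phi> f) (\<Phi> g)"
    and aQ: "\<And>f g. f \<in> lcar (mag X) \<Longrightarrow> g \<in> lcar (mag X) \<Longrightarrow> \<Psi> (madd f g) = add (\<Psi> f) (\<Psi> g)"
    and d: "\<And>c t. set_tr t \<subseteq> X \<Longrightarrow> c \<noteq> 0 \<Longrightarrow> \<Phi> (cdl c t) = \<Psi> (cdl c t)"
  shows "\<Phi> f = \<Psi> f"
proof -
  have main: "\<forall>f::'x tr \<Rightarrow> 'k. f \<in> lcar (mag X) \<longrightarrow> supp f = S \<longrightarrow> \<Phi> f = \<Psi> f" if "finite S" for S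
    using that
  proof (induction S rule: finite_induct)
    case empty
    show ?case
    proof (intro allI impI)
      fix f :: "'x tr \<Rightarrow> 'k" assume "f \<in> lcar (mag X)" "supp f = {}"
      then have "f = (\<lambda>t. 0)" unfolding supp_def by auto
      then show "\<Phi> f = \<Psi> f" using z by simp
    qed
  next
    case (insert a S)
    show ?case
    proof (intro allI impI)
      fix f :: "'x tr \<Rightarrow> 'k" assume f: "f \<in> lcar (mag X)" and sf: "supp f = insert a S"
      define g where "g = f(a := 0)"
      have sg: "supp g = S" using sf insert(2) unfolding g_def supp_def by auto
      have fa: "f a \<noteq> 0" using sf unfolding supp_def by auto
      have at: "set_tr a \<subseteq> X" using f sf unfolding mag_car by auto
      have gc: "g \<in> lcar (mag X)" using f sg sf unfolding mag_car by auto
      have cc: "cdl (f a) a \<in> lcar (mag X)" using mag_cdl[OF at] .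
      have fe: "f = madd g (cdl (f a) a)" unfolding g_def madd_def cdl_def by auto
      have "\<Phi> f = add (\<Phi> g) (\<Phi> (cdl (f a) a))" using aP[OF gc cc] fe by simp
      also have "\<dots> = add (\<Psi> g) (\<Psi> (cdl (f a) a))" using insert(3) gc sg d[OF at fa] by simp
      also have "\<dots> = \<Psi> f" using aQ[OF gc cc] fe by simp
      finally show "\<Phi> f = \<Psi> f" .
    qed
  qed
  have "finite (supp f)" using f unfolding mag_car by blast
  then show ?thesis using main f by blast
qed

lemma mag_ev_br:
  assumes lb: "leibniz A" and f: "f \<in> lcar (mag (lcar A))" and g: "g \<in> lcar (mag (lcar A))"
  shows "mag_ev A (mbr f g) = lbr A (mag_ev A f) (mag_ev A g)"
proof -
  have vs: "vspace A" by (rule lb_vs[OF lb])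
  note car = mag_ev_car[OF lb]
  have inner: "mag_ev A (mbr (cdl c a) g) = lbr A (mag_ev A (cdl c a)) (mag_ev A g)"
    if a: "set_tr a \<subseteq> lcar A" and g: "g \<in> lcar (mag (lcar A))" for c a g
  proof (rule mag_eq[OF g, where add="ladd A"])
    have ca: "cdl c a \<in> lcar (mag (lcar A))" by (rule mag_cdl[OF a])
    show "mag_ev A (mbr (cdl c a) (\<lambda>t. 0)) = lbr A (mag_ev A (cdl c a)) (mag_ev A (\<lambda>t. 0))"
      by (simp add: mbr_zero mag_ev_zero[OF lb] lb_zero_r[OF lb] car[OF ca])
    show "mag_ev A (mbr (cdl c a) (madd f1 f2)) = ladd A (mag_ev A (mbr (cdl c a) f1)) (mag_ev A (mbr (cdl c a) f2))"
      if "f1 \<in> lcar (mag (lcar A))" "f2 \<in> lcar (mag (lcar A))" for f1 f2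
      using that by (simp add: mbr_addr mag_ev_add[OF lb] mag_br ca)
    show "lbr A (mag_ev A (cdl c a)) (mag_ev A (madd f1 f2)) = ladd A (lbr A (mag_ev A (cdl c a)) (mag_ev A f1)) (lbr A (mag_ev A (cdl c a)) (mag_ev A f2))"
      if "f1 \<in> lcar (mag (lcar A))" "f2 \<in> lcar (mag (lcar A))" for f1 f2
      using that by (simp add: mag_ev_add[OF lb] lb_addr[OF lb] car ca)
    show "mag_ev A (mbr (cdl c a) (cdl d b)) = lbr A (mag_ev A (cdl c a)) (mag_ev A (cdl d b))"
      if b: "set_tr b \<subseteq> lcar A" "d \<noteq> 0" for d b
    proof -
      have ea: "tr_ev A a \<in> lcar A" and eb: "tr_ev A b \<in> lcar A" using tr_ev_car[OF lb] a b by auto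
      have nd: "set_tr (Nd a b) \<subseteq> lcar A" using a b by simp
      have "mag_ev A (mbr (cdl c a) (cdl d b)) = lsmult A (c * d) (lbr A (tr_ev A a) (tr_ev A b))"
        unfolding mbr_cdl mag_ev_cdl[OF lb nd] by simp
      also have "\<dots> = lsmult A c (lsmult A d (lbr A (tr_ev A a) (tr_ev A b)))"
        using vs_sassoc[OF vs lb_br[OF lb ea eb]] by simp
      also have "\<dots> = lbr A (lsmult A c (tr_ev A a)) (lsmult A d (tr_ev A b))"
        using lb_sml[OF lb ea vs_smult[OF vs eb]] lb_smr[OF lb ea eb] by simp
      finally show ?thesis unfolding mag_ev_cdl[OF lb a] mag_ev_cdl[OF lb b(1)] .
    qed
  qed
  show ?thesis
  proof (rule mag_eq[OF f, where add="ladd A" and \<Phi>="\<lambda>f. mag_ev A (mbr f g)" and \<Psi>="\<lambda>f. lbr A (mag_ev A f) (mag_ev A g)", simplified])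
    show "mag_ev A (mbr (\<lambda>t. 0) g) = lbr A (mag_ev A (\<lambda>t. 0)) (mag_ev A g)"
      by (simp add: mbr_zero mag_ev_zero[OF lb] lb_zero_l[OF lb] car[OF g])
    show "mag_ev A (mbr (madd f1 f2) g) = ladd A (mag_ev A (mbr f1 g)) (mag_ev A (mbr f2 g))"
      if "f1 \<in> lcar (mag (lcar A))" "f2 \<in> lcar (mag (lcar A))" for f1 f2
      using that g by (simp add: mbr_addl mag_ev_add[OF lb] mag_br)
    show "lbr A (mag_ev A (madd f1 f2)) (mag_ev A g) = ladd A (lbr A (mag_ev A f1) (mag_ev A g)) (lbr A (mag_ev A f2) (mag_ev A g))"
      if "f1 \<in> lcar (mag (lcar A))" "f2 \<in> lcar (mag (lcar A))" for f1 f2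
      using that g by (simp add: mag_ev_add[OF lb] lb_addl[OF lb] car)
    show "mag_ev A (mbr (cdl c a) g) = lbr A (mag_ev A (cdl c a)) (mag_ev A g)"
      if "set_tr a \<subseteq> lcar A" "c \<noteq> 0" for c a
      using inner[OF that(1) g] .
  qed
qed


section \<open>Evaluation kills the Leibniz ideal\<close>

lemma mag_ev_FLI:
  fixes A :: "('k::field, 'a) lalg" and f :: "'a tr \<Rightarrow> 'k"
  assumes lb: "leibniz A" and f: "f \<in> FLI (lcar A)"
  shows "mag_ev A f = lzero A"
proof -
  have vs: "vspace A" by (rule lb_vs[OF lb])
  note car = mag_ev_car[OF lb]
  let ?K = "{f \<in> lcar (mag (lcar A)). mag_ev A f = lzero A}"
  have id: "ideal (mag (lcar A)) ?K"
    unfolding ideal_def subspace_def mag_simps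
  proof (intro conjI ballI allI)
    show "?K \<subseteq> lcar (mag (lcar A))" by blast
    show "(\<lambda>t. 0) \<in> ?K" using mag_zero mag_ev_zero[OF lb] by blast
    show "madd x y \<in> ?K" if "x \<in> ?K" "y \<in> ?K" for x y
      using that by (simp add: mag_add mag_ev_add[OF lb] vs_zero_r[OF vs vs_zero[OF vs]])
    show "msm c x \<in> ?K" if "x \<in> ?K" for x c
      using that by (simp add: mag_smult mag_ev_smult[OF lb] vs_smult_zero[OF vs])
    show "mbr x i \<in> ?K" if "x \<in> lcar (mag (lcar A))" "i \<in> ?K" for x i
      using that by (simp add: mag_br mag_ev_br[OF lb] lb_zero_r[OF lb] car)
    show "mbr i x \<in> ?K" if "x \<in> lcar (mag (lcar A))" "i \<in> ?K" for x i
      using that by (simp add: mag_br mag_ev_br[OF lb] lb_zero_l[OF lb] car)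
  qed
  have lr: "leib_rel (lcar A) \<inter> lcar (mag (lcar A)) \<subseteq> ?K"
  proof
    fix e :: "'a tr \<Rightarrow> 'k" assume e: "e \<in> leib_rel (lcar A) \<inter> lcar (mag (lcar A))"
    obtain a b c where abc: "a \<in> lcar (mag (lcar A))" "b \<in> lcar (mag (lcar A))" "c \<in> lcar (mag (lcar A))"
      and ee: "e = madd (mbr a (mbr b c)) (msm (-1) (madd (mbr (mbr a b) c) (msm (-1) (mbr (mbr a c) b))))"
      using e unfolding leib_rel_def mag_simps by blast
    define a' where "a' = mag_ev A a"
    define b' where "b' = mag_ev A b"
    define c' where "c' = mag_ev A c"
    have cc: "a' \<in> lcar A" "b' \<in> lcar A" "c' \<in> lcar A" unfolding a'_def b'_def c'_def using car abc by auto
    define W where "W = ladd A (lbr A (lbr A a' b') c') (lsmult A (-1) (lbr A (lbr A a' c') b'))"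
    have "mag_ev A e = ladd A (lbr A a' (lbr A b' c')) (lsmult A (-1) (ladd A (lbr A (lbr A a' b') c') (lsmult A (-1) (lbr A (lbr A a' c') b'))))"
      unfolding ee a'_def b'_def c'_def
      by (simp add: mag_ev_add[OF lb] mag_ev_smult[OF lb] mag_ev_br[OF lb] mag_br mag_add mag_smult abc)
    also have "\<dots> = ladd A W (lsmult A (-1) W)" unfolding W_def lb_id[OF lb cc] ..
    also have "\<dots> = lzero A"
      by (rule vs_neg[OF vs]) (unfold W_def, use cc in \<open>simp add: lb_br[OF lb] vs_add[OF vs] vs_smult[OF vs]\<close>)
    finally show "e \<in> ?K" using e by blast
  qed
  have "FLI (lcar A) \<subseteq> ?K" unfolding FLI_def by (rule ideal_gen_min[OF id lr])
  then show ?thesis using f by blast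
qed

lemma sum_restr:
  assumes "finite T" "{s. f s \<noteq> 0 \<and> P s} \<subseteq> T" "T \<subseteq> {s. P s}"
  shows "sum f {s. f s \<noteq> (0::'k::field) \<and> P s} = sum f T"
  by (rule sum.mono_neutral_left) (use assms in auto)

lemma magmap_app: "magmap h f t = sum f {s. f s \<noteq> 0 \<and> map_tr h s = t}"
  unfolding magmap_def by simp

lemma magmap_add:
  assumes "finite (supp f)" "finite (supp g)"
  shows "magmap h (madd f g) = madd (magmap h f) (magmap h g)"
proof
  fix t
  let ?T = "{s \<in> supp f \<union> supp g. map_tr h s = t}"
  have fin: "finite ?T" using assms by auto
  have "magmap h (madd f g) t = sum (madd f g) ?T"
    unfolding magmap_app by (rule sum_restr[OF fin]) (auto simp: madd_def supp_def)
  also have "\<dots> = sum f ?T + sum g ?T" unfolding madd_def by (rule sum.distrib)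
  also have "sum f ?T = magmap h f t"
    unfolding magmap_app by (rule sum_restr[OF fin, symmetric]) (auto simp: supp_def)
  also have "sum g ?T = magmap h g t"
    unfolding magmap_app by (rule sum_restr[OF fin, symmetric]) (auto simp: supp_def)
  finally show "magmap h (madd f g) t = madd (magmap h f) (magmap h g) t" unfolding madd_def .
qed

lemma magmap_smult: "magmap h (msm c f) = msm c (magmap h f)"
proof
  fix t
  show "magmap h (msm c f) t = msm c (magmap h f) t"
  proof (cases "c = 0")
    case True then show ?thesis unfolding magmap_app msm_def by simp
  next
    case False
    then have "{s. c * f s \<noteq> 0 \<and> map_tr h s = t} = {s. f s \<noteq> 0 \<and> map_tr h s = t}" by auto
    then show ?thesis unfolding magmap_app msm_def by (simp add: sum_distrib_left)
  qed
qed

lemma magmap_zero: "magmap h (\<lambda>t. 0) = (\<lambda>t. 0)"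
  unfolding magmap_def by simp

lemma magmap_cdl: "magmap h (cdl c t) = cdl c (map_tr h t)"
proof
  fix u
  show "magmap h (cdl c t) u = cdl c (map_tr h t) u"
  proof (cases "c = 0")
    case True then show ?thesis unfolding magmap_app cdl_def by simp
  next
    case False
    then have "{s. cdl c t s \<noteq> 0 \<and> map_tr h s = u} = (if map_tr h t = u then {t} else {})"
      unfolding cdl_def by auto
    then show ?thesis unfolding magmap_app by (simp add: cdl_def)
  qed
qed

lemma magmap_car:
  assumes f: "f \<in> lcar (mag X)" and h: "h ` X \<subseteq> Y"
  shows "magmap h f \<in> lcar (mag Y)"
proof -
  have s: "supp (magmap h f) \<subseteq> map_tr h ` supp f"
  proof
    fix t assume "t \<in> supp (magmap h f)"
    then have "{s. f s \<noteq> 0 \<and> map_tr h s = t} \<noteq> {}" unfolding supp_def magmap_app by force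
    then show "t \<in> map_tr h ` supp f" unfolding supp_def by blast
  qed
  have "finite (supp f)" using f unfolding mag_car by blast
  then have "finite (supp (magmap h f))" using s finite_subset by blast
  moreover have "\<forall>t\<in>supp (magmap h f). set_tr t \<subseteq> Y"
  proof
    fix t assume "t \<in> supp (magmap h f)"
    then obtain s where "s \<in> supp f" "t = map_tr h s" using s by blast
    then show "set_tr t \<subseteq> Y" using f h unfolding mag_car by (auto simp: tr.set_map)
  qed
  ultimately show ?thesis unfolding mag_car by blast
qed

lemma mag_fin: "f \<in> lcar (mag X) \<Longrightarrow> finite (supp f)"
  unfolding mag_car by blast

lemma magmap_br:
  assumes f: "f \<in> lcar (mag X)" and g: "g \<in> lcar (mag X)"
  shows "magmap h (mbr f g) = mbr (magmap h f) (magmap h g)"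
proof -
  have fu: "\<And>f. f \<in> lcar (mag X) \<Longrightarrow> finite (supp (magmap h f))"
    using magmap_car[of _ X h UNIV] mag_fin by blast
  have inner: "magmap h (mbr (cdl c a) g) = mbr (magmap h (cdl c a)) (magmap h g)"
    if a: "set_tr a \<subseteq> X" and g: "g \<in> lcar (mag X)" for c a g
  proof (rule mag_eq[OF g, where add=madd])
    have ca: "cdl c a \<in> lcar (mag X)" by (rule mag_cdl[OF a])
    show "magmap h (mbr (cdl c a) (\<lambda>t. 0)) = mbr (magmap h (cdl c a)) (magmap h (\<lambda>t. 0))"
      by (simp add: mbr_zero magmap_zero)
    show "magmap h (mbr (cdl c a) (madd f1 f2)) = madd (magmap h (mbr (cdl c a) f1)) (magmap h (mbr (cdl c a) f2))"
      if "f1 \<in> lcar (mag X)" "f2 \<in> lcar (mag X)" for f1 f2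
      using that ca by (simp add: mbr_addr magmap_add[OF mag_fin[OF mag_br[OF ca that(1)]] mag_fin[OF mag_br[OF ca that(2)]]])
    show "mbr (magmap h (cdl c a)) (magmap h (madd f1 f2)) = madd (mbr (magmap h (cdl c a)) (magmap h f1)) (mbr (magmap h (cdl c a)) (magmap h f2))"
      if "f1 \<in> lcar (mag X)" "f2 \<in> lcar (mag X)" for f1 f2
      using that by (simp add: mbr_addr magmap_add[OF mag_fin[OF that(1)] mag_fin[OF that(2)]])
    show "magmap h (mbr (cdl c a) (cdl d b)) = mbr (magmap h (cdl c a)) (magmap h (cdl d b))"
      if "set_tr b \<subseteq> X" "d \<noteq> 0" for d b
      by (simp add: mbr_cdl magmap_cdl)
  qed
  show ?thesis
  proof (rule mag_eq[OF f, where add=madd and \<Phi>="\<lambda>f. magmap h (mbr f g)" and \<Psi>="\<lambda>f. mbr (magmap h f) (magmap h g)", simplified])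
    show "magmap h (mbr (\<lambda>t. 0) g) = mbr (magmap h (\<lambda>t. 0)) (magmap h g)"
      by (simp add: mbr_zero magmap_zero)
    show "magmap h (mbr (madd f1 f2) g) = madd (magmap h (mbr f1 g)) (magmap h (mbr f2 g))"
      if "f1 \<in> lcar (mag X)" "f2 \<in> lcar (mag X)" for f1 f2
      using that g by (simp add: mbr_addl magmap_add[OF mag_fin[OF mag_br[OF that(1) g]] mag_fin[OF mag_br[OF that(2) g]]])
    show "mbr (magmap h (madd f1 f2)) (magmap h g) = madd (mbr (magmap h f1) (magmap h g)) (mbr (magmap h f2) (magmap h g))"
      if "f1 \<in> lcar (mag X)" "f2 \<in> lcar (mag X)" for f1 f2
      using that by (simp add: mbr_addl magmap_add[OF mag_fin[OF that(1)] mag_fin[OF that(2)]])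
    show "magmap h (mbr (cdl c a) g) = mbr (magmap h (cdl c a)) (magmap h g)"
      if "set_tr a \<subseteq> X" "c \<noteq> 0" for c a
      using inner[OF that(1) g] .
  qed
qed

lemma map_tr_inv: "(\<forall>x\<in>set_tr t. g (h x) = x) \<Longrightarrow> map_tr g (map_tr h t) = t"
  by (induction t) auto

lemma magmap_comp:
  assumes f: "f \<in> lcar (mag X)" and inv: "\<forall>x\<in>X. g (h x) = x"
  shows "magmap g (magmap h f) = f"
proof (rule mag_eq[OF f, where add=madd and \<Psi>="\<lambda>f. f", simplified])
  have fu: "\<And>f. f \<in> lcar (mag X) \<Longrightarrow> finite (supp (magmap h f))"
    using magmap_car[of _ X h UNIV] mag_fin by blast
  show "magmap g (magmap h (\<lambda>t. 0)) = (\<lambda>t. 0)" by (simp add: magmap_zero)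
  show "magmap g (magmap h (madd f1 f2)) = madd (magmap g (magmap h f1)) (magmap g (magmap h f2))"
    if "f1 \<in> lcar (mag X)" "f2 \<in> lcar (mag X)" for f1 f2
    using that by (simp add: magmap_add[OF mag_fin[OF that(1)] mag_fin[OF that(2)]] magmap_add[OF fu[OF that(1)] fu[OF that(2)]])
  show "magmap g (magmap h (cdl c t)) = cdl c t" if "set_tr t \<subseteq> X" "c \<noteq> 0" for c t
  proof -
    have "map_tr g (map_tr h t) = t" by (rule map_tr_inv) (use that inv in blast)
    then show ?thesis by (simp add: magmap_cdl)
  qed
qed

lemma magmap_FLI:
  assumes h: "h ` X \<subseteq> Y" and f: "f \<in> FLI X"
  shows "magmap h f \<in> FLI Y"
proof -
  let ?K = "{f \<in> lcar (mag X). magmap h f \<in> FLI Y}"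
  have mc: "\<And>f. f \<in> lcar (mag X) \<Longrightarrow> magmap h f \<in> lcar (mag Y)" using magmap_car h by blast
  have id: "ideal (mag X) ?K"
    unfolding ideal_def subspace_def mag_simps
  proof (intro conjI ballI allI)
    show "?K \<subseteq> lcar (mag X)" by blast
    show "(\<lambda>t. 0) \<in> ?K" using mag_zero[of X] FLI_zero[of Y] by (simp add: magmap_zero)
    show "madd x y \<in> ?K" if "x \<in> ?K" "y \<in> ?K" for x y
    proof -
      have x: "x \<in> lcar (mag X)" "magmap h x \<in> FLI Y" and y: "y \<in> lcar (mag X)" "magmap h y \<in> FLI Y"
        using that by auto
      have "magmap h (madd x y) = madd (magmap h x) (magmap h y)"
        by (rule magmap_add[OF mag_fin[OF x(1)] mag_fin[OF y(1)]])
      then have "magmap h (madd x y) \<in> FLI Y" using FLI_add[OF x(2) y(2)] by simp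
      then show ?thesis using mag_add[OF x(1) y(1)] by blast
    qed
    show "msm c x \<in> ?K" if "x \<in> ?K" for x c
      using that by (simp add: mag_smult magmap_smult FLI_smult)
    show "mbr x i \<in> ?K" if "x \<in> lcar (mag X)" "i \<in> ?K" for x i
      using that by (simp add: mag_br magmap_br FLI_brr mc)
    show "mbr i x \<in> ?K" if "x \<in> lcar (mag X)" "i \<in> ?K" for x i
    proof -
      have i: "i \<in> lcar (mag X)" "magmap h i \<in> FLI Y" using that by auto
      have "magmap h (mbr i x) = mbr (magmap h i) (magmap h x)" by (rule magmap_br[OF i(1) that(1)])
      then have "magmap h (mbr i x) \<in> FLI Y" using FLI_brl[OF mc[OF that(1)] i(2)] by simp
      then show ?thesis using mag_br[OF i(1) that(1)] by blast
    qed
  qed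
  have lr: "leib_rel X \<inter> lcar (mag X) \<subseteq> ?K"
  proof
    fix e assume e: "e \<in> leib_rel X \<inter> lcar (mag X)"
    obtain a b c where abc: "a \<in> lcar (mag X)" "b \<in> lcar (mag X)" "c \<in> lcar (mag X)"
      and ee: "e = madd (mbr a (mbr b c)) (msm (-1) (madd (mbr (mbr a b) c) (msm (-1) (mbr (mbr a c) b))))"
      using e unfolding leib_rel_def mag_simps by blast
    have m: "magmap h a \<in> lcar (mag Y)" "magmap h b \<in> lcar (mag Y)" "magmap h c \<in> lcar (mag Y)"
      using mc abc by auto
    have "magmap h e = madd (mbr (magmap h a) (mbr (magmap h b) (magmap h c)))
       (msm (-1) (madd (mbr (mbr (magmap h a) (magmap h b)) (magmap h c))
         (msm (-1) (mbr (mbr (magmap h a) (magmap h c)) (magmap h b)))))" (is "_ = ?R")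
    proof -
      note a = abc(1) and b = abc(2) and c = abc(3)
      have A1: "mbr a (mbr b c) \<in> lcar (mag X)" using a b c by (simp add: mag_br)
      have A2: "mbr (mbr a b) c \<in> lcar (mag X)" using a b c by (simp add: mag_br)
      have A3: "mbr (mbr a c) b \<in> lcar (mag X)" using a b c by (simp add: mag_br)
      have A4: "msm (-1) (madd (mbr (mbr a b) c) (msm (-1) (mbr (mbr a c) b))) \<in> lcar (mag X)"
        using A2 A3 by (simp add: mag_add mag_smult)
      have A5: "msm (-1) (mbr (mbr a c) b) \<in> lcar (mag X)" using A3 by (simp add: mag_smult)
      have m1: "magmap h (mbr a (mbr b c)) = mbr (magmap h a) (mbr (magmap h b) (magmap h c))"
        unfolding magmap_br[OF a mag_br[OF b c]] magmap_br[OF b c] ..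
      have m2: "magmap h (mbr (mbr a b) c) = mbr (mbr (magmap h a) (magmap h b)) (magmap h c)"
        unfolding magmap_br[OF mag_br[OF a b] c] magmap_br[OF a b] ..
      have m3: "magmap h (mbr (mbr a c) b) = mbr (mbr (magmap h a) (magmap h c)) (magmap h b)"
        unfolding magmap_br[OF mag_br[OF a c] b] magmap_br[OF a c] ..
      show ?thesis unfolding ee
        magmap_add[OF mag_fin[OF A1] mag_fin[OF A4]] magmap_smult
        magmap_add[OF mag_fin[OF A2] mag_fin[OF A5]] m1 m2 m3 ..
    qed
    moreover have "?R \<in> leib_rel Y" unfolding leib_rel_def mag_simps using m by blast
    moreover have "?R \<in> lcar (mag Y)" using m by (simp add: mag_br mag_add mag_smult)
    ultimately have "magmap h e \<in> FLI Y" unfolding FLI_def by (simp add: ideal_gen_gen)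
    then show "e \<in> ?K" using e by blast
  qed
  have "FLI X \<subseteq> ?K" unfolding FLI_def[of X] by (rule ideal_gen_min[OF id lr])
  then show ?thesis using f by blast
qed

lemma tr_ev_nat:
  assumes lP: "leibniz P" and h: "hom P G \<psi>"
  shows "set_tr t \<subseteq> lcar P \<Longrightarrow> \<psi> (tr_ev P t) = tr_ev G (map_tr \<psi> t)"
proof (induction t)
  case (Lf x) then show ?case by simp
next
  case (Nd l r)
  then show ?case using hom_br[OF h tr_ev_car[OF lP] tr_ev_car[OF lP]] by simp
qed

lemma mag_ev_nat:
  assumes lP: "leibniz P" and lG: "leibniz G" and h: "hom P G \<psi>"
    and f: "f \<in> lcar (mag (lcar P))"
  shows "\<psi> (mag_ev P f) = mag_ev G (magmap \<psi> f)"
proof (rule mag_eq[OF f, where add="ladd G" and \<Phi>="\<lambda>f. \<psi> (mag_ev P f)" and \<Psi>="\<lambda>f. mag_ev G (magmap \<psi> f)", simplified])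
  have hc: "\<psi> ` lcar P \<subseteq> lcar G" using h unfolding hom_def by blast
  have mc: "\<And>f. f \<in> lcar (mag (lcar P)) \<Longrightarrow> magmap \<psi> f \<in> lcar (mag (lcar G))"
    using magmap_car hc by blast
  show "\<psi> (mag_ev P (\<lambda>t. 0)) = mag_ev G (magmap \<psi> (\<lambda>t. 0))"
    by (simp add: mag_ev_zero[OF lP] mag_ev_zero[OF lG] magmap_zero hom_zero[OF lb_vs[OF lP] lb_vs[OF lG] h])
  show "\<psi> (mag_ev P (madd f1 f2)) = ladd G (\<psi> (mag_ev P f1)) (\<psi> (mag_ev P f2))"
    if "f1 \<in> lcar (mag (lcar P))" "f2 \<in> lcar (mag (lcar P))" for f1 f2
    using that by (simp add: mag_ev_add[OF lP] hom_add[OF h] mag_ev_car[OF lP])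
  show "mag_ev G (magmap \<psi> (madd f1 f2)) = ladd G (mag_ev G (magmap \<psi> f1)) (mag_ev G (magmap \<psi> f2))"
    if "f1 \<in> lcar (mag (lcar P))" "f2 \<in> lcar (mag (lcar P))" for f1 f2
    using that by (simp add: magmap_add mag_fin mag_ev_add[OF lG] mc)
  show "\<psi> (mag_ev P (cdl c t)) = mag_ev G (magmap \<psi> (cdl c t))"
    if t: "set_tr t \<subseteq> lcar P" "c \<noteq> 0" for c t
  proof -
    have t2: "set_tr (map_tr \<psi> t) \<subseteq> lcar G" using t hc by (auto simp: tr.set_map)
    show ?thesis
      unfolding mag_ev_cdl[OF lP t(1)] magmap_cdl mag_ev_cdl[OF lG t2]
      using hom_smult[OF h tr_ev_car[OF lP t(1)]] tr_ev_nat[OF lP h t(1)] by simp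
  qed
qed


lemma proj_cs:
  fixes A :: "('k::field, 'a) lalg" and f :: "'a tr \<Rightarrow> 'k"
  assumes lb: "leibniz A" and f: "f \<in> lcar (mag (lcar A))"
  shows "proj A (cs (lcar A) f) = mag_ev A f"
proof -
  let ?q = "qrep (mag (lcar A)) (FLI (lcar A)) (cs (lcar A) f)"
  have d: "(\<lambda>t. ?q t - f t) \<in> FLI (lcar A)" by (rule qrep_cs_diff[OF f])
  have e: "madd f (\<lambda>t. ?q t - f t) = ?q" unfolding madd_def by simp
  have "mag_ev A (madd f (\<lambda>t. ?q t - f t)) = ladd A (mag_ev A f) (mag_ev A (\<lambda>t. ?q t - f t))"
    by (rule mag_ev_add[OF lb f FLI_car[OF d]])
  also have "\<dots> = mag_ev A f"
    unfolding mag_ev_FLI[OF lb d] by (rule vs_zero_r[OF lb_vs[OF lb] mag_ev_car[OF lb f]])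
  finally show ?thesis unfolding proj_def e .
qed

lemma Fmap_cs:
  fixes P :: "('k::field, 'a) lalg" and G :: "('k, 'g) lalg" and f :: "'a tr \<Rightarrow> 'k"
  assumes hc: "\<psi> ` lcar P \<subseteq> lcar G" and f: "f \<in> lcar (mag (lcar P))"
  shows "Fmap P G \<psi> (cs (lcar P) f) = cs (lcar G) (magmap \<psi> f)"
proof -
  let ?q = "qrep (mag (lcar P)) (FLI (lcar P)) (cs (lcar P) f)"
  let ?d = "\<lambda>t. ?q t - f t"
  have d: "?d \<in> FLI (lcar P)" by (rule qrep_cs_diff[OF f])
  have q: "?q \<in> lcar (mag (lcar P))" using qrep_cs[OF f] by blast
  have e: "madd f ?d = ?q" unfolding madd_def by simp
  have "magmap \<psi> (madd f ?d) = madd (magmap \<psi> f) (magmap \<psi> ?d)"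
    by (rule magmap_add[OF mag_fin[OF f] mag_fin[OF FLI_car[OF d]]])
  then have mq: "magmap \<psi> ?q = madd (magmap \<psi> f) (magmap \<psi> ?d)" unfolding e .
  have "cs (lcar G) (magmap \<psi> ?q) = cs (lcar G) (magmap \<psi> f)"
  proof (rule cs_eqI)
    show "magmap \<psi> ?q \<in> lcar (mag (lcar G))" by (rule magmap_car[OF q hc])
    show "magmap \<psi> f \<in> lcar (mag (lcar G))" by (rule magmap_car[OF f hc])
    have "(\<lambda>t. magmap \<psi> ?q t - magmap \<psi> f t) = magmap \<psi> ?d" unfolding mq madd_def by simp
    then show "(\<lambda>t. magmap \<psi> ?q t - magmap \<psi> f t) \<in> FLI (lcar G)" using magmap_FLI[OF hc d] by simp
  qed
  then show ?thesis unfolding Fmap_def by simp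
qed

lemma coset_restr: "coset (restr A S) I a = coset A I a"
  unfolding coset_def restr_def by simp

lemma FL_add_zero: "W \<in> lcar (FL X) \<Longrightarrow> ladd (FL X) W (lzero (FL X)) = W"
proof -
  assume "W \<in> lcar (FL X)"
  then obtain f where f: "f \<in> lcar (mag X)" "W = cs X f" using FL_elem by metis
  show ?thesis unfolding f(2) FL_zero FL_add[OF f(1) mag_zero] madd_zero ..
qed

section \<open>Evaluation through a section\<close>

definition ev_s :: "('k::field, 'b) lalg \<Rightarrow> ('g \<Rightarrow> 'b) \<Rightarrow> ('g tr \<Rightarrow> 'k) \<Rightarrow> 'b" where
  "ev_s P s f = mag_ev P (magmap s f)"

context
  fixes P :: "('k::field, 'b) lalg" and s :: "'g \<Rightarrow> 'b" and X :: "'g set"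
  assumes lP: "leibniz P" and sc: "s ` X \<subseteq> lcar P"
begin

lemma ev_s_mc: "f \<in> lcar (mag X) \<Longrightarrow> magmap s f \<in> lcar (mag (lcar P))"
  using magmap_car sc by blast

lemma ev_s_car: "f \<in> lcar (mag X) \<Longrightarrow> ev_s P s f \<in> lcar P"
  unfolding ev_s_def by (rule mag_ev_car[OF lP ev_s_mc])

lemma ev_s_add: "f \<in> lcar (mag X) \<Longrightarrow> g \<in> lcar (mag X) \<Longrightarrow>
  ev_s P s (madd f g) = ladd P (ev_s P s f) (ev_s P s g)"
  unfolding ev_s_def magmap_add[OF mag_fin mag_fin] by (rule mag_ev_add[OF lP ev_s_mc ev_s_mc])

lemma ev_s_smult: "f \<in> lcar (mag X) \<Longrightarrow> ev_s P s (msm c f) = lsmult P c (ev_s P s f)"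
  unfolding ev_s_def magmap_smult by (rule mag_ev_smult[OF lP ev_s_mc])

lemma ev_s_br: "f \<in> lcar (mag X) \<Longrightarrow> g \<in> lcar (mag X) \<Longrightarrow>
  ev_s P s (mbr f g) = lbr P (ev_s P s f) (ev_s P s g)"
proof -
  assume f: "f \<in> lcar (mag X)" and g: "g \<in> lcar (mag X)"
  show ?thesis unfolding ev_s_def magmap_br[OF f g] by (rule mag_ev_br[OF lP ev_s_mc[OF f] ev_s_mc[OF g]])
qed

lemma ev_s_zero: "ev_s P s (\<lambda>t. 0) = lzero P"
  unfolding ev_s_def magmap_zero by (rule mag_ev_zero[OF lP])

lemma ev_s_FLI: "f \<in> FLI X \<Longrightarrow> ev_s P s f = lzero P"
  unfolding ev_s_def by (rule mag_ev_FLI[OF lP magmap_FLI[OF sc]])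

lemma ev_s_cdl: "x \<in> X \<Longrightarrow> ev_s P s (cdl 1 (Lf x)) = s x"
proof -
  assume x: "x \<in> X"
  have sx: "s x \<in> lcar P" using sc x by blast
  have "ev_s P s (cdl 1 (Lf x)) = lsmult P 1 (tr_ev P (Lf (s x)))"
    unfolding ev_s_def magmap_cdl by (simp add: mag_ev_cdl[OF lP] sx)
  also have "\<dots> = s x" using vs_one[OF lb_vs[OF lP] sx] by simp
  finally show ?thesis .
qed

lemma ev_s_cs: "f \<in> lcar (mag X) \<Longrightarrow> ev_s P s (qrep (mag X) (FLI X) (cs X f)) = ev_s P s f"
proof -
  assume f: "f \<in> lcar (mag X)"
  let ?q = "qrep (mag X) (FLI X) (cs X f)"
  have d: "(\<lambda>t. ?q t - f t) \<in> FLI X" by (rule qrep_cs_diff[OF f])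
  have e: "madd f (\<lambda>t. ?q t - f t) = ?q" unfolding madd_def by simp
  have "ev_s P s (madd f (\<lambda>t. ?q t - f t)) = ladd P (ev_s P s f) (ev_s P s (\<lambda>t. ?q t - f t))"
    by (rule ev_s_add[OF f FLI_car[OF d]])
  also have "\<dots> = ev_s P s f"
    unfolding ev_s_FLI[OF d] by (rule vs_zero_r[OF lb_vs[OF lP] ev_s_car[OF f]])
  finally show ?thesis unfolding e .
qed

end

lemma ev_s_nat:
  assumes lP: "leibniz P" and lG: "leibniz G" and h: "hom P G \<psi>"
    and sc: "s ` lcar G \<subseteq> lcar P" and inv: "\<forall>x\<in>lcar G. \<psi> (s x) = x"
    and f: "f \<in> lcar (mag (lcar G))"
  shows "\<psi> (ev_s P s f) = mag_ev G f"
  unfolding ev_s_def mag_ev_nat[OF lP lG h ev_s_mc[OF lP sc f]] magmap_comp[where g=\<psi> and h=s, OF f inv] ..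

definition fr :: "'x \<Rightarrow> 'x \<Rightarrow> ('x tr \<Rightarrow> 'k::field)" where
  "fr x y = madd (mbr (cdl 1 (Lf x)) (cdl 1 (Lf y))) (mbr (cdl 1 (Lf y)) (cdl 1 (Lf x)))"

lemma lf_car: "x \<in> X \<Longrightarrow> cdl c (Lf x) \<in> lcar (mag X)"
  by (rule mag_cdl) simp

lemma fr_car: "x \<in> X \<Longrightarrow> y \<in> X \<Longrightarrow> fr x y \<in> lcar (mag X)"
  unfolding fr_def by (intro mag_add mag_br lf_car)

lemma magmap_fr: "x \<in> X \<Longrightarrow> y \<in> X \<Longrightarrow> magmap h (fr x y) = fr (h x) (h y)"
proof -
  assume x: "x \<in> X" and y: "y \<in> X"
  note lx = lf_car[OF x, of 1] and ly = lf_car[OF y, of 1]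
  show ?thesis unfolding fr_def
    magmap_add[OF mag_fin[OF mag_br[OF lx ly]] mag_fin[OF mag_br[OF ly lx]]]
    magmap_br[OF lx ly] magmap_br[OF ly lx] magmap_cdl by simp
qed

lemma ev_s_fr:
  assumes lP: "leibniz P" and sc: "s ` X \<subseteq> lcar P" and x: "x \<in> X" and y: "y \<in> X"
  shows "ev_s P s (fr x y) = ladd P (lbr P (s x) (s y)) (lbr P (s y) (s x))"
proof -
  note lx = lf_car[OF x, of 1] and ly = lf_car[OF y, of 1]
  show ?thesis unfolding fr_def
    ev_s_add[OF lP sc mag_br[OF lx ly] mag_br[OF ly lx]]
    ev_s_br[OF lP sc lx ly] ev_s_br[OF lP sc ly lx] ev_s_cdl[OF lP sc x] ev_s_cdl[OF lP sc y] ..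
qed

lemma cs_fr:
  assumes x: "x \<in> X" and y: "y \<in> X"
  shows "cs X (fr x y) = ladd (FL X) (lbr (FL X) (cs X (cdl 1 (Lf x))) (cs X (cdl 1 (Lf y))))
                                      (lbr (FL X) (cs X (cdl 1 (Lf y))) (cs X (cdl 1 (Lf x))))"
proof -
  note lx = lf_car[OF x, of 1] and ly = lf_car[OF y, of 1]
  show ?thesis unfolding fr_def FL_br[OF lx ly] FL_br[OF ly lx] FL_add[OF mag_br[OF lx ly] mag_br[OF ly lx]] ..
qed

lemma cs_fr_brLie:
  assumes x: "x \<in> X" and y: "y \<in> X" and M: "cs X (cdl 1 (Lf x)) \<in> M" and N: "cs X (cdl 1 (Lf y)) \<in> N"
  shows "cs X (fr x y) \<in> brLie (FL X) M N"
  unfolding brLie_def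
proof (rule lspan_gen)
  show "cs X (fr x y) \<in> lcar (FL X)" unfolding FL_car using fr_car[OF x y] by (rule imageI)
  show "cs X (fr x y) \<in> {ladd (FL X) (lbr (FL X) m n) (lbr (FL X) n m) |m n. m \<in> M \<and> n \<in> N}"
    unfolding cs_fr[OF x y]
    apply (rule CollectI)
    apply (rule exI[where x="cs X (cdl 1 (Lf x))"])
    apply (rule exI[where x="cs X (cdl 1 (Lf y))"])
    using M N by simp
qed


lemma brLie_add: "x \<in> brLie A M N \<Longrightarrow> y \<in> brLie A M N \<Longrightarrow> ladd A x y \<in> lcar A \<Longrightarrow> ladd A x y \<in> brLie A M N"
  unfolding brLie_def by (rule lspan_add)
lemma brLie_smult: "x \<in> brLie A M N \<Longrightarrow> lsmult A c x \<in> lcar A \<Longrightarrow> lsmult A c x \<in> brLie A M N"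
  unfolding brLie_def by (rule lspan_smult)
lemma brLie_min: "subspace A T \<Longrightarrow> {ladd A (lbr A m n) (lbr A n m) |m n. m \<in> M \<and> n \<in> N} \<inter> lcar A \<subseteq> T \<Longrightarrow> brLie A M N \<subseteq> T"
  unfolding brLie_def by (rule lspan_min)
lemma brLie_gen: "x \<in> {ladd A (lbr A m n) (lbr A n m) |m n. m \<in> M \<and> n \<in> N} \<Longrightarrow> x \<in> lcar A \<Longrightarrow> x \<in> brLie A M N"
  unfolding brLie_def by (rule lspan_gen)
lemma brLie_zero: "lzero A \<in> lcar A \<Longrightarrow> lzero A \<in> brLie A M N"
  unfolding brLie_def by (rule lspan_zero)
lemma brLie_car: "brLie A M N \<subseteq> lcar A"
  unfolding brLie_def by (rule lspan_car)

lemma mag_ev_fr: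
  assumes lb: "leibniz A" and x: "x \<in> lcar A" and y: "y \<in> lcar A"
  shows "mag_ev A (fr x y) = ladd A (lbr A x y) (lbr A y x)"
proof -
  have vs: "vspace A" by (rule lb_vs[OF lb])
  note lx = lf_car[OF x, of 1] and ly = lf_car[OF y, of 1]
  have ex: "mag_ev A (cdl 1 (Lf x)) = x" using mag_ev_cdl[OF lb, of "Lf x" 1] x vs_one[OF vs x] by simp
  have ey: "mag_ev A (cdl 1 (Lf y)) = y" using mag_ev_cdl[OF lb, of "Lf y" 1] y vs_one[OF vs y] by simp
  show ?thesis unfolding fr_def
    mag_ev_add[OF lb mag_br[OF lx ly] mag_br[OF ly lx]]
    mag_ev_br[OF lb lx ly] mag_ev_br[OF lb ly lx] ex ey ..
qed

lemma zlie_shift: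
  assumes lb: "leibniz P" and a: "a \<in> lcar P" and w: "w \<in> lcar P" and d: "d \<in> ZLie P"
    and e: "ladd P (lbr P a w) (lbr P w a) = lzero P"
  shows "ladd P (lbr P (ladd P a d) w) (lbr P w (ladd P a d)) = lzero P"
proof -
  have vs: "vspace P" by (rule lb_vs[OF lb])
  have dc: "d \<in> lcar P" using d unfolding ZLie_def by blast
  have dz: "ladd P (lbr P w d) (lbr P d w) = lzero P" using d w unfolding ZLie_def by blast
  have c: "lbr P a w \<in> lcar P" "lbr P w a \<in> lcar P" "lbr P d w \<in> lcar P" "lbr P w d \<in> lcar P"
    using a w dc by (simp_all add: lb_br[OF lb])
  have "ladd P (lbr P (ladd P a d) w) (lbr P w (ladd P a d))
      = ladd P (ladd P (lbr P a w) (lbr P d w)) (ladd P (lbr P w a) (lbr P w d))"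
    unfolding lb_addl[OF lb a dc w] lb_addr[OF lb w a dc] ..
  also have "\<dots> = ladd P (ladd P (lbr P a w) (lbr P w a)) (ladd P (lbr P d w) (lbr P w d))"
    by (rule vs_swap4[OF vs c(1) c(3) c(2) c(4)])
  also have "\<dots> = ladd P (lbr P d w) (lbr P w d)"
    unfolding e by (rule vs_zero_l[OF vs vs_add[OF vs c(3) c(4)]])
  also have "\<dots> = ladd P (lbr P w d) (lbr P d w)" by (rule vs_comm[OF vs c(3) c(4)])
  also have "\<dots> = lzero P" by (rule dz)
  finally show ?thesis .
qed

lemma kerh_diff:
  assumes vP: "vspace P" and vG: "vspace G" and h: "hom P G \<psi>"
    and x: "x \<in> lcar P" and y: "y \<in> lcar P" and e: "\<psi> x = \<psi> y"
  shows "ladd P x (lsmult P (-1) y) \<in> kerh P G \<psi>"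
proof -
  have ym: "lsmult P (-1) y \<in> lcar P" by (rule vs_smult[OF vP y])
  have "\<psi> (ladd P x (lsmult P (-1) y)) = ladd G (\<psi> y) (lsmult G (-1) (\<psi> y))"
    unfolding hom_add[OF h x ym] hom_smult[OF h y] e ..
  also have "\<dots> = lzero G" by (rule vs_neg[OF vG hom_car[OF h y]])
  finally show ?thesis unfolding kerh_def using vs_add[OF vP x ym] by blast
qed

lemma rel_G:
  fixes G :: "('k::field, 'g) lalg"
  assumes lG: "leibniz G" and n: "n \<in> lcar (mag (lcar G))" and e: "mag_ev G n = lzero G"
  shows "cs (lcar G) n \<in> rel G"
  unfolding rel_def kerh_def using proj_cs[OF lG n] e n FL_car by auto

lemma Fmap_I:
  fixes G :: "('k::field, 'g) lalg" and P :: "('k, 'a) lalg"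
  assumes lG: "leibniz G" and lP: "leibniz P" and h: "hom P G \<psi>"
    and i: "i \<in> brLie (FL (lcar P)) (lcar (FL (lcar P))) (rel P)"
  shows "Fmap P G \<psi> i \<in> brLie (FL (lcar G)) (lcar (FL (lcar G))) (rel G)"
proof -
  let ?F1 = "FL (lcar P)" and ?FG = "FL (lcar G)"
  let ?IG = "brLie ?FG (lcar ?FG) (rel G)"
  have hc: "\<psi> ` lcar P \<subseteq> lcar G" using h unfolding hom_def by blast
  let ?T = "{W \<in> lcar ?F1. Fmap P G \<psi> W \<in> ?IG}"
  have IGz: "lzero ?FG \<in> ?IG" by (rule brLie_zero[OF FL_zero_car])
  have sub: "subspace ?F1 ?T"
    unfolding subspace_def
  proof (intro conjI ballI allI)
    show "?T \<subseteq> lcar ?F1" by blast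
    show "lzero ?F1 \<in> ?T"
      using FL_zero_car[of "lcar P"] IGz Fmap_cs[OF hc mag_zero] by (simp add: FL_zero magmap_zero)
    show "ladd ?F1 x y \<in> ?T" if xy: "x \<in> ?T" "y \<in> ?T" for x y
    proof -
      obtain f where f: "f \<in> lcar (mag (lcar P))" "x = cs (lcar P) f" using xy FL_elem by blast
      obtain g where g: "g \<in> lcar (mag (lcar P))" "y = cs (lcar P) g" using xy FL_elem by blast
      have mf: "magmap \<psi> f \<in> lcar (mag (lcar G))" and mg: "magmap \<psi> g \<in> lcar (mag (lcar G))"
        using magmap_car[OF f(1) hc] magmap_car[OF g(1) hc] by auto
      have "Fmap P G \<psi> (ladd ?F1 x y) = ladd ?FG (Fmap P G \<psi> x) (Fmap P G \<psi> y)"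
        unfolding f(2) g(2) FL_add[OF f(1) g(1)] Fmap_cs[OF hc mag_add[OF f(1) g(1)]] Fmap_cs[OF hc f(1)]
          Fmap_cs[OF hc g(1)] FL_add[OF mf mg] magmap_add[OF mag_fin[OF f(1)] mag_fin[OF g(1)]] ..
      moreover have "ladd ?FG (Fmap P G \<psi> x) (Fmap P G \<psi> y) \<in> ?IG"
      proof (rule brLie_add)
        show "Fmap P G \<psi> x \<in> ?IG" "Fmap P G \<psi> y \<in> ?IG" using xy by auto
        show "ladd ?FG (Fmap P G \<psi> x) (Fmap P G \<psi> y) \<in> lcar ?FG"
          unfolding f(2) g(2) Fmap_cs[OF hc f(1)] Fmap_cs[OF hc g(1)]
          by (intro FL_add_car) (use mf mg FL_car in auto)
      qed
      ultimately show ?thesis using FL_add_car xy by auto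
    qed
    show "lsmult ?F1 c x \<in> ?T" if xT: "x \<in> ?T" for x c
    proof -
      obtain f where f: "f \<in> lcar (mag (lcar P))" "x = cs (lcar P) f" using xT FL_elem by blast
      have mf: "magmap \<psi> f \<in> lcar (mag (lcar G))" using magmap_car[OF f(1) hc] by auto
      have "Fmap P G \<psi> (lsmult ?F1 c x) = lsmult ?FG c (Fmap P G \<psi> x)"
        unfolding f(2) FL_smult[OF f(1)] Fmap_cs[OF hc mag_smult[OF f(1)]] Fmap_cs[OF hc f(1)]
          FL_smult[OF mf] magmap_smult ..
      moreover have "lsmult ?FG c (Fmap P G \<psi> x) \<in> ?IG"
      proof (rule brLie_smult)
        show "Fmap P G \<psi> x \<in> ?IG" using xT by auto
        show "lsmult ?FG c (Fmap P G \<psi> x) \<in> lcar ?FG"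
          unfolding f(2) Fmap_cs[OF hc f(1)] by (intro FL_smult_car) (use mf FL_car in auto)
      qed
      ultimately show ?thesis using FL_smult_car xT by auto
    qed
  qed
  have gens: "{ladd ?F1 (lbr ?F1 m n) (lbr ?F1 n m) |m n. m \<in> lcar ?F1 \<and> n \<in> rel P} \<inter> lcar ?F1 \<subseteq> ?T"
  proof
    fix x assume "x \<in> {ladd ?F1 (lbr ?F1 m n) (lbr ?F1 n m) |m n. m \<in> lcar ?F1 \<and> n \<in> rel P} \<inter> lcar ?F1"
    then obtain m n where x: "x = ladd ?F1 (lbr ?F1 m n) (lbr ?F1 n m)" and m: "m \<in> lcar ?F1"
      and n: "n \<in> rel P" and xc: "x \<in> lcar ?F1" by blast
    have nc: "n \<in> lcar ?F1" and pn: "proj P n = lzero P" using n unfolding rel_def kerh_def by auto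
    obtain fm where fm: "fm \<in> lcar (mag (lcar P))" "m = cs (lcar P) fm" using m FL_elem by blast
    obtain fn where fn: "fn \<in> lcar (mag (lcar P))" "n = cs (lcar P) fn" using nc FL_elem by blast
    have mm: "magmap \<psi> fm \<in> lcar (mag (lcar G))" and mn: "magmap \<psi> fn \<in> lcar (mag (lcar G))"
      using magmap_car[OF fm(1) hc] magmap_car[OF fn(1) hc] by auto
    have x2: "x = cs (lcar P) (madd (mbr fm fn) (mbr fn fm))"
      unfolding x fm(2) fn(2) FL_br[OF fm(1) fn(1)] FL_br[OF fn(1) fm(1)] FL_add[OF mag_br[OF fm(1) fn(1)] mag_br[OF fn(1) fm(1)]] ..
    have "Fmap P G \<psi> x = cs (lcar G) (madd (mbr (magmap \<psi> fm) (magmap \<psi> fn)) (mbr (magmap \<psi> fn) (magmap \<psi> fm)))"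
      unfolding x2 Fmap_cs[OF hc mag_add[OF mag_br[OF fm(1) fn(1)] mag_br[OF fn(1) fm(1)]]]
        magmap_add[OF mag_fin[OF mag_br[OF fm(1) fn(1)]] mag_fin[OF mag_br[OF fn(1) fm(1)]]]
        magmap_br[OF fm(1) fn(1)] magmap_br[OF fn(1) fm(1)] ..
    also have "\<dots> = ladd ?FG (lbr ?FG (cs (lcar G) (magmap \<psi> fm)) (cs (lcar G) (magmap \<psi> fn)))
                              (lbr ?FG (cs (lcar G) (magmap \<psi> fn)) (cs (lcar G) (magmap \<psi> fm)))"
      unfolding FL_br[OF mm mn] FL_br[OF mn mm] FL_add[OF mag_br[OF mm mn] mag_br[OF mn mm]] ..
    finally have fx: "Fmap P G \<psi> x = \<dots>" .
    have "mag_ev G (magmap \<psi> fn) = \<psi> (mag_ev P fn)" by (rule mag_ev_nat[OF lP lG h fn(1), symmetric])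
    also have "\<dots> = \<psi> (proj P n)" unfolding fn(2) proj_cs[OF lP fn(1)] ..
    also have "\<dots> = lzero G" unfolding pn by (rule hom_zero[OF lb_vs[OF lP] lb_vs[OF lG] h])
    finally have nrel: "cs (lcar G) (magmap \<psi> fn) \<in> rel G" by (rule rel_G[OF lG mn])
    have mcar: "cs (lcar G) (magmap \<psi> fm) \<in> lcar ?FG" using mm FL_car by auto
    have "Fmap P G \<psi> x \<in> ?IG" unfolding fx
    proof (rule brLie_gen)
      show "ladd ?FG (lbr ?FG (cs (lcar G) (magmap \<psi> fm)) (cs (lcar G) (magmap \<psi> fn)))
                     (lbr ?FG (cs (lcar G) (magmap \<psi> fn)) (cs (lcar G) (magmap \<psi> fm))) \<in> lcar ?FG"
        using mm mn FL_car by (auto intro!: FL_add_car FL_br_car)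
      show "ladd ?FG (lbr ?FG (cs (lcar G) (magmap \<psi> fm)) (cs (lcar G) (magmap \<psi> fn)))
                     (lbr ?FG (cs (lcar G) (magmap \<psi> fn)) (cs (lcar G) (magmap \<psi> fm)))
            \<in> {ladd ?FG (lbr ?FG m n) (lbr ?FG n m) |m n. m \<in> lcar ?FG \<and> n \<in> rel G}"
        apply (rule CollectI)
        apply (rule exI[where x="cs (lcar G) (magmap \<psi> fm)"])
        apply (rule exI[where x="cs (lcar G) (magmap \<psi> fn)"])
        using mcar nrel by simp
    qed
    then show "x \<in> ?T" using xc by blast
  qed
  have "brLie ?F1 (lcar ?F1) (rel P) \<subseteq> ?T" by (rule brLie_min[OF sub gens])
  then show ?thesis using i by blast
qed


lemma cs_car: "f \<in> lcar (mag X) \<Longrightarrow> cs X f \<in> lcar (FL X)"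
  unfolding FL_car by (rule imageI)

lemma lcar_restr: "lcar (restr A S) = S" unfolding restr_def by simp
lemma lzero_restr: "lzero (restr A S) = lzero A" unfolding restr_def by simp

lemma coset_mem: "b = ladd A a x \<Longrightarrow> x \<in> I \<Longrightarrow> b \<in> coset A I a"
  unfolding coset_def by (rule image_eqI)
lemma coset_memD: "b \<in> coset A I a \<Longrightarrow> \<exists>x\<in>I. b = ladd A a x"
  unfolding coset_def by blast

lemma step1:
  fixes G :: "('k::field, 'g) lalg" and P :: "('k, 'a) lalg"
  assumes lG: "leibniz G" and lP: "leibniz P" and h: "hom P G \<psi>"
    and sc: "s ` lcar G \<subseteq> lcar P" and inv: "\<forall>x\<in>lcar G. \<psi> (s x) = x"
    and mult: "\<forall>Y\<in>lcar (Mult P). Mmap P G \<psi> Y = lzero (Mult G)"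
    and v: "v \<in> lcar G" and u: "u \<in> lcar G" and zu: "s u \<in> ZLie P"
  shows "cs (lcar G) (fr v u) \<in> brLie (FL (lcar G)) (lcar (FL (lcar G))) (rel G)"
proof -
  let ?X1 = "lcar P" and ?F1 = "FL (lcar P) :: ('k, ('a tr \<Rightarrow> 'k) set) lalg"
    and ?FG = "FL (lcar G) :: ('k, ('g tr \<Rightarrow> 'k) set) lalg"
  let ?IG = "brLie ?FG (lcar ?FG) (rel G)"
  let ?I1 = "brLie ?F1 (lcar ?F1) (rel P)"
  let ?S1 = "rel P \<inter> brLie ?F1 (lcar ?F1) (lcar ?F1)"
  have hc: "\<psi> ` lcar P \<subseteq> lcar G" using h unfolding hom_def by blast
  have svc: "s v \<in> lcar P" and suc: "s u \<in> lcar P" using sc v u by auto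
  define Z where "Z = cs ?X1 (fr (s v) (s u) :: 'a tr \<Rightarrow> 'k)"
  have frc: "(fr (s v) (s u) :: 'a tr \<Rightarrow> 'k) \<in> lcar (mag ?X1)" by (rule fr_car[OF svc suc])
  have Zc: "Z \<in> lcar ?F1" unfolding Z_def by (rule cs_car[OF frc])
  have "proj P Z = lzero P"
    unfolding Z_def proj_cs[OF lP frc] mag_ev_fr[OF lP svc suc] using zu svc unfolding ZLie_def by blast
  then have Zr: "Z \<in> rel P" unfolding rel_def kerh_def using Zc by blast
  have Zb: "Z \<in> brLie ?F1 (lcar ?F1) (lcar ?F1)" unfolding Z_def
    by (rule cs_fr_brLie[OF svc suc]) (rule cs_car, rule lf_car, fact)+
  have ZS: "Z \<in> ?S1" using Zr Zb by blast
  define Y where "Y = coset (restr ?F1 ?S1) ?I1 Z"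
  have YM: "Y \<in> lcar (Mult P)" unfolding Mult_def Let_def quot_def Y_def lcar_restr
    using ZS by simp
  have mY: "Mmap P G \<psi> Y = lzero (Mult G)" using mult YM by blast
  define Z' where "Z' = qrep (restr ?F1 ?S1) ?I1 Y"
  have Z'S: "Z' \<in> lcar (restr ?F1 ?S1) \<and> Y = coset (restr ?F1 ?S1) ?I1 Z'"
    unfolding Z'_def qrep_def
    by (rule someI[of "\<lambda>a. a \<in> lcar (restr ?F1 ?S1) \<and> Y = coset (restr ?F1 ?S1) ?I1 a" Z])
       (use ZS in \<open>auto simp: Y_def lcar_restr\<close>)
  have Z'c: "Z' \<in> lcar ?F1" using Z'S unfolding lcar_restr rel_def kerh_def by blast
  have cosE: "coset ?F1 ?I1 Z' = coset ?F1 ?I1 Z" using Z'S unfolding Y_def coset_restr by simp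
  have I1z: "lzero ?F1 \<in> ?I1" by (rule brLie_zero[OF FL_zero_car])
  have "Z' \<in> coset ?F1 ?I1 Z'" unfolding coset_def
    by (rule image_eqI[where x="lzero ?F1"]) (simp_all add: FL_add_zero[OF Z'c] I1z)
  then obtain i where i: "i \<in> ?I1" "Z' = ladd ?F1 Z i" using cosE unfolding coset_def by auto
  have ic: "i \<in> lcar ?F1" by (rule subsetD[OF brLie_car i(1)])
  obtain fi where fi: "fi \<in> lcar (mag ?X1)" "i = cs ?X1 fi" using ic FL_elem by blast
  have Z'e: "Z' = cs ?X1 (madd (fr (s v) (s u)) fi)" unfolding i(2) Z_def fi(2) FL_add[OF frc fi(1)] ..
  have mfi: "magmap \<psi> fi \<in> lcar (mag (lcar G))" by (rule magmap_car[OF fi(1) hc])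
  have frG: "(fr v u :: 'g tr \<Rightarrow> 'k) \<in> lcar (mag (lcar G))" by (rule fr_car[OF v u])
  have mfr: "magmap \<psi> (fr (s v) (s u) :: 'a tr \<Rightarrow> 'k) = fr v u" unfolding magmap_fr[OF svc suc] using inv v u by simp
  have FZ': "Fmap P G \<psi> Z' = cs (lcar G) (madd (fr v u) (magmap \<psi> fi))"
    unfolding Z'e Fmap_cs[OF hc mag_add[OF frc fi(1)]] magmap_add[OF mag_fin[OF frc] mag_fin[OF fi(1)]] mfr ..
  have kI: "cs (lcar G) (magmap \<psi> fi) \<in> ?IG"
    using Fmap_I[OF lG lP h i(1)] unfolding fi(2) Fmap_cs[OF hc fi(1)] .
  have MG0: "lzero (Mult G) = coset ?FG ?IG (lzero ?FG)"
    unfolding Mult_def Let_def quot_def by (simp add: coset_restr lzero_restr)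
  have "Mmap P G \<psi> Y = coset ?FG ?IG (Fmap P G \<psi> Z')" unfolding Mmap_def Let_def Z'_def ..
  then have ceq: "coset ?FG ?IG (cs (lcar G) (madd (fr v u) (magmap \<psi> fi))) = coset ?FG ?IG (lzero ?FG)"
    using mY MG0 FZ' by simp
  let ?T = "cs (lcar G) (madd (fr v u) (magmap \<psi> fi))"
  have Tc: "?T \<in> lcar ?FG" by (rule cs_car[OF mag_add[OF frG mfi]])
  have IGz: "lzero ?FG \<in> ?IG" by (rule brLie_zero[OF FL_zero_car])
  have "?T \<in> coset ?FG ?IG ?T" by (rule coset_mem[OF FL_add_zero[OF Tc, symmetric] IGz])
  then have "?T \<in> coset ?FG ?IG (lzero ?FG)" unfolding ceq .
  from coset_memD[OF this] obtain i' where i': "i' \<in> ?IG" "?T = ladd ?FG (lzero ?FG) i'" ..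
  have i'c: "i' \<in> lcar ?FG" by (rule subsetD[OF brLie_car i'(1)])
  obtain fi' where fi': "fi' \<in> lcar (mag (lcar G))" "i' = cs (lcar G) fi'" using i'c FL_elem by blast
  have "?T = cs (lcar G) fi'" using i'(2) unfolding fi'(2) FL_zero FL_add[OF mag_zero fi'(1)] madd_zero .
  then have d: "(\<lambda>t. madd (fr v u) (magmap \<psi> fi) t - fi' t) \<in> FLI (lcar G)"
    using cs_eq[OF mag_add[OF frG mfi] fi'(1)] by blast
  have e1: "cs (lcar G) (fr v u) = cs (lcar G) (madd fi' (msm (-1) (magmap \<psi> fi)))"
  proof (rule cs_eqI[OF frG])
    show "madd fi' (msm (-1) (magmap \<psi> fi)) \<in> lcar (mag (lcar G))" by (intro mag_add mag_smult fi'(1) mfi)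
    have "(\<lambda>t. fr v u t - madd fi' (msm (-1) (magmap \<psi> fi)) t) = (\<lambda>t. madd (fr v u) (magmap \<psi> fi) t - fi' t)"
      unfolding madd_def msm_def by (simp add: algebra_simps)
    then show "(\<lambda>t. fr v u t - madd fi' (msm (-1) (magmap \<psi> fi)) t) \<in> FLI (lcar G)" using d by simp
  qed
  have e2: "cs (lcar G) (madd fi' (msm (-1) (magmap \<psi> fi))) = ladd ?FG i' (lsmult ?FG (-1) (cs (lcar G) (magmap \<psi> fi)))"
    unfolding fi'(2) FL_smult[OF mfi] FL_add[OF fi'(1) mag_smult[OF mfi]] ..
  have "ladd ?FG i' (lsmult ?FG (-1) (cs (lcar G) (magmap \<psi> fi))) \<in> ?IG"
  proof (rule brLie_add[OF i'(1)])
    show "lsmult ?FG (-1) (cs (lcar G) (magmap \<psi> fi)) \<in> ?IG"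
      by (rule brLie_smult[OF kI FL_smult_car[OF cs_car[OF mfi]]])
    show "ladd ?FG i' (lsmult ?FG (-1) (cs (lcar G) (magmap \<psi> fi))) \<in> lcar ?FG"
      by (rule FL_add_car[OF i'c FL_smult_car[OF cs_car[OF mfi]]])
  qed
  then show ?thesis unfolding e1 e2 .
qed

lemma step2:
  fixes G :: "('k::field, 'g) lalg" and P :: "('k, 'b) lalg"
  assumes lG: "leibniz G" and lP: "leibniz P" and h: "hom P G \<psi>"
    and sc: "s ` lcar G \<subseteq> lcar P" and inv: "\<forall>x\<in>lcar G. \<psi> (s x) = x"
    and k: "kerh P G \<psi> \<subseteq> ZLie P"
    and v: "v \<in> lcar G" and u: "u \<in> lcar G"
    and rho: "cs (lcar G) (fr v u) \<in> brLie (FL (lcar G)) (lcar (FL (lcar G))) (rel G)"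
  shows "ev_s P s (fr v u) = lzero P"
proof -
  let ?X = "lcar G" and ?FG = "FL (lcar G) :: ('k, ('g tr \<Rightarrow> 'k) set) lalg"
  have vs: "vspace P" by (rule lb_vs[OF lP])
  define \<theta> where "\<theta> W = ev_s P s (qrep (mag ?X) (FLI ?X) W)" for W
  have \<theta>cs: "\<And>f. f \<in> lcar (mag ?X) \<Longrightarrow> \<theta> (cs ?X f) = ev_s P s f"
    unfolding \<theta>_def by (rule ev_s_cs[OF lP sc])
  let ?T = "{W \<in> lcar ?FG. \<theta> W = lzero P}"
  have sub: "subspace ?FG ?T" unfolding subspace_def
  proof (intro conjI ballI allI)
    show "?T \<subseteq> lcar ?FG" by blast
    show "lzero ?FG \<in> ?T"
      using FL_zero_car[of ?X] \<theta>cs[OF mag_zero[of ?X]] ev_s_zero[OF lP sc] by (simp add: FL_zero)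
    show "ladd ?FG x y \<in> ?T" if xy: "x \<in> ?T" "y \<in> ?T" for x y
    proof -
      obtain f where f: "f \<in> lcar (mag ?X)" "x = cs ?X f" using xy FL_elem by blast
      obtain g where g: "g \<in> lcar (mag ?X)" "y = cs ?X g" using xy FL_elem by blast
      have "\<theta> (ladd ?FG x y) = ladd P (\<theta> x) (\<theta> y)"
        unfolding f(2) g(2) FL_add[OF f(1) g(1)] \<theta>cs[OF mag_add[OF f(1) g(1)]] \<theta>cs[OF f(1)] \<theta>cs[OF g(1)]
        by (rule ev_s_add[OF lP sc f(1) g(1)])
      then show ?thesis using xy FL_add_car vs_zero_r[OF vs vs_zero[OF vs]] by auto
    qed
    show "lsmult ?FG c x \<in> ?T" if xT: "x \<in> ?T" for x c
    proof -
      obtain f where f: "f \<in> lcar (mag ?X)" "x = cs ?X f" using xT FL_elem by blast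
      have "\<theta> (lsmult ?FG c x) = lsmult P c (\<theta> x)"
        unfolding f(2) FL_smult[OF f(1)] \<theta>cs[OF mag_smult[OF f(1)]] \<theta>cs[OF f(1)]
        by (rule ev_s_smult[OF lP sc f(1)])
      then show ?thesis using xT FL_smult_car vs_smult_zero[OF vs] by auto
    qed
  qed
  have gens: "{ladd ?FG (lbr ?FG m n) (lbr ?FG n m) |m n. m \<in> lcar ?FG \<and> n \<in> rel G} \<inter> lcar ?FG \<subseteq> ?T"
  proof
    fix x assume "x \<in> {ladd ?FG (lbr ?FG m n) (lbr ?FG n m) |m n. m \<in> lcar ?FG \<and> n \<in> rel G} \<inter> lcar ?FG"
    then obtain m n where x: "x = ladd ?FG (lbr ?FG m n) (lbr ?FG n m)" and m: "m \<in> lcar ?FG"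
      and n: "n \<in> rel G" and xc: "x \<in> lcar ?FG" by blast
    have nc: "n \<in> lcar ?FG" and pn: "proj G n = lzero G" using n unfolding rel_def kerh_def by auto
    obtain fm where fm: "fm \<in> lcar (mag ?X)" "m = cs ?X fm" using m FL_elem by blast
    obtain fn where fn: "fn \<in> lcar (mag ?X)" "n = cs ?X fn" using nc FL_elem by blast
    have x2: "x = cs ?X (madd (mbr fm fn) (mbr fn fm))"
      unfolding x fm(2) fn(2) FL_br[OF fm(1) fn(1)] FL_br[OF fn(1) fm(1)] FL_add[OF mag_br[OF fm(1) fn(1)] mag_br[OF fn(1) fm(1)]] ..
    have tx: "\<theta> x = ladd P (lbr P (ev_s P s fm) (ev_s P s fn)) (lbr P (ev_s P s fn) (ev_s P s fm))"
      unfolding x2 \<theta>cs[OF mag_add[OF mag_br[OF fm(1) fn(1)] mag_br[OF fn(1) fm(1)]]]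
        ev_s_add[OF lP sc mag_br[OF fm(1) fn(1)] mag_br[OF fn(1) fm(1)]]
        ev_s_br[OF lP sc fm(1) fn(1)] ev_s_br[OF lP sc fn(1) fm(1)] ..
    have "\<psi> (ev_s P s fn) = mag_ev G fn" by (rule ev_s_nat[OF lP lG h sc inv fn(1)])
    also have "\<dots> = lzero G" using pn unfolding fn(2) proj_cs[OF lG fn(1)] .
    finally have "ev_s P s fn \<in> kerh P G \<psi>" unfolding kerh_def using ev_s_car[OF lP sc fn(1)] by blast
    then have "ev_s P s fn \<in> ZLie P" using k by blast
    then have "\<theta> x = lzero P" unfolding tx using ev_s_car[OF lP sc fm(1)] unfolding ZLie_def by blast
    then show "x \<in> ?T" using xc by blast
  qed
  have "brLie ?FG (lcar ?FG) (rel G) \<subseteq> ?T" by (rule brLie_min[OF sub gens])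
  then have "\<theta> (cs ?X (fr v u)) = lzero P" using rho by blast
  then show ?thesis using \<theta>cs[OF fr_car[OF v u]] by simp
qed


lemma section_ex:
  assumes s: "\<psi> ` lcar P = lcar G"
  obtains sec where "sec ` lcar G \<subseteq> lcar P" "\<forall>x\<in>lcar G. \<psi> (sec x) = x"
proof -
  have "\<forall>x\<in>lcar G. \<exists>y. y \<in> lcar P \<and> \<psi> y = x"
  proof
    fix x assume "x \<in> lcar G"
    then have "x \<in> \<psi> ` lcar P" using s by simp
    then obtain y where "y \<in> lcar P" "x = \<psi> y" by (rule imageE)
    then show "\<exists>y. y \<in> lcar P \<and> \<psi> y = x" by blast
  qed
  from bchoice[OF this] obtain sec where "\<forall>x\<in>lcar G. sec x \<in> lcar P \<and> \<psi> (sec x) = x" ..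
  then show ?thesis using that by blast
qed

lemma lsc_lP: "lie_stem_cover P G \<psi> \<Longrightarrow> leibniz P" unfolding lie_stem_cover_def by (elim conjE)
lemma lsc_lG: "lie_stem_cover P G \<psi> \<Longrightarrow> leibniz G" unfolding lie_stem_cover_def by (elim conjE)
lemma lsc_hom: "lie_stem_cover P G \<psi> \<Longrightarrow> hom P G \<psi>" unfolding lie_stem_cover_def by (elim conjE)
lemma lsc_sur: "lie_stem_cover P G \<psi> \<Longrightarrow> \<psi> ` lcar P = lcar G" unfolding lie_stem_cover_def by (elim conjE)
lemma lsc_ker: "lie_stem_cover P G \<psi> \<Longrightarrow> kerh P G \<psi> \<subseteq> ZLie P" unfolding lie_stem_cover_def by (elim conjE)
lemma lsc_mult: "lie_stem_cover P G \<psi> \<Longrightarrow> \<forall>Y\<in>lcar (Mult P). Mmap P G \<psi> Y = lzero (Mult G)"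
  unfolding lie_stem_cover_def by (elim conjE)

lemma main_incl:
  fixes G :: "('k::field, 'g) lalg" and P1 :: "('k, 'a) lalg" and P2 :: "('k, 'b) lalg"
  assumes c1: "lie_stem_cover P1 G \<psi>1" and c2: "lie_stem_cover P2 G \<psi>2"
  shows "\<psi>1 ` ZLie P1 \<subseteq> \<psi>2 ` ZLie P2"
proof
  have lG: "leibniz G" and l1: "leibniz P1" and h1: "hom P1 G \<psi>1" and sur1: "\<psi>1 ` lcar P1 = lcar G"
    and k1: "kerh P1 G \<psi>1 \<subseteq> ZLie P1" and mult1: "\<forall>Y\<in>lcar (Mult P1). Mmap P1 G \<psi>1 Y = lzero (Mult G)"
    using lsc_lG[OF c1] lsc_lP[OF c1] lsc_hom[OF c1] lsc_sur[OF c1] lsc_ker[OF c1] lsc_mult[OF c1] by auto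
  have l2: "leibniz P2" and h2: "hom P2 G \<psi>2" and sur2: "\<psi>2 ` lcar P2 = lcar G"
    and k2: "kerh P2 G \<psi>2 \<subseteq> ZLie P2"
    using lsc_lP[OF c2] lsc_hom[OF c2] lsc_sur[OF c2] lsc_ker[OF c2] by auto
  have vG: "vspace G" and v1: "vspace P1" and v2: "vspace P2" using lG l1 l2 lb_vs by blast+
  obtain s1 where sc1: "s1 ` lcar G \<subseteq> lcar P1" and inv1: "\<forall>x\<in>lcar G. \<psi>1 (s1 x) = x"
    using section_ex[OF sur1] by blast
  obtain s2 where sc2: "s2 ` lcar G \<subseteq> lcar P2" and inv2: "\<forall>x\<in>lcar G. \<psi>2 (s2 x) = x"
    using section_ex[OF sur2] by blast
  fix z assume "z \<in> \<psi>1 ` ZLie P1"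
  then obtain w where w: "w \<in> ZLie P1" "z = \<psi>1 w" by blast
  have wc: "w \<in> lcar P1" using w unfolding ZLie_def by blast
  define u where "u = \<psi>1 w"
  have uG: "u \<in> lcar G" unfolding u_def by (rule hom_car[OF h1 wc])
  have s1uc: "s1 u \<in> lcar P1" using sc1 uG by blast
  have s2uc: "s2 u \<in> lcar P2" using sc2 uG by blast
  have "ladd P1 (s1 u) (lsmult P1 (-1) w) \<in> kerh P1 G \<psi>1"
    by (rule kerh_diff[OF v1 vG h1 s1uc wc]) (use inv1 uG u_def in simp)
  then have dZ: "ladd P1 (s1 u) (lsmult P1 (-1) w) \<in> ZLie P1" using k1 by blast
  have "ladd P1 w (ladd P1 (s1 u) (lsmult P1 (-1) w)) = s1 u" by (rule vs_sub_eq[OF v1 s1uc wc])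
  then have s1uZ: "s1 u \<in> ZLie P1" using zlie_add[OF l1 w(1) dZ] by simp
  have key: "ladd P2 (lbr P2 y (s2 u)) (lbr P2 (s2 u) y) = lzero P2" if yc: "y \<in> lcar P2" for y
  proof -
    define v where "v = \<psi>2 y"
    have vG': "v \<in> lcar G" unfolding v_def by (rule hom_car[OF h2 yc])
    have s2vc: "s2 v \<in> lcar P2" using sc2 vG' by blast
    have rho: "cs (lcar G) (fr v u) \<in> brLie (FL (lcar G)) (lcar (FL (lcar G))) (rel G)"
      by (rule step1[OF lG l1 h1 sc1 inv1 mult1 vG' uG s1uZ])
    have "ev_s P2 s2 (fr v u) = lzero P2" by (rule step2[OF lG l2 h2 sc2 inv2 k2 vG' uG rho])
    then have e: "ladd P2 (lbr P2 (s2 v) (s2 u)) (lbr P2 (s2 u) (s2 v)) = lzero P2"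
      unfolding ev_s_fr[OF l2 sc2 vG' uG] .
    have "ladd P2 y (lsmult P2 (-1) (s2 v)) \<in> kerh P2 G \<psi>2"
      by (rule kerh_diff[OF v2 vG h2 yc s2vc]) (use inv2 vG' v_def in simp)
    then have d2: "ladd P2 y (lsmult P2 (-1) (s2 v)) \<in> ZLie P2" using k2 by blast
    have ye: "ladd P2 (s2 v) (ladd P2 y (lsmult P2 (-1) (s2 v))) = y" by (rule vs_sub_eq[OF v2 yc s2vc])
    show ?thesis using zlie_shift[OF l2 s2vc s2uc d2 e] unfolding ye .
  qed
  have "s2 u \<in> ZLie P2" unfolding ZLie_def using key s2uc by blast
  moreover have "z = \<psi>2 (s2 u)" using w(2) u_def inv2 uG by simp
  ultimately show "z \<in> \<psi>2 ` ZLie P2" by (rule rev_image_eqI)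
qed

section \<open>Isomorphism of the quotients\<close>

lemma qrep_restr:
  assumes "W \<in> coset A I ` S"
  shows "qrep (restr A S) I W \<in> S \<and> W = coset A I (qrep (restr A S) I W)"
proof -
  obtain z where z: "z \<in> S" "W = coset A I z" using assms by blast
  show ?thesis unfolding qrep_def lcar_restr coset_restr
    by (rule someI[of "\<lambda>a. a \<in> S \<and> W = coset A I a" z]) (use z in simp)
qed

lemma qrep_gen:
  assumes "b \<in> lcar A"
  shows "qrep A I (coset A I b) \<in> lcar A \<and> coset A I (qrep A I (coset A I b)) = coset A I b"
  unfolding qrep_def
  by (rule someI[of "\<lambda>a. a \<in> lcar A \<and> coset A I b = coset A I a" b, THEN conjE]) (use assms in auto)

lemma quot_restr_ops:
  "lcar (quot (restr A S) I) = coset A I ` S"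
  "ladd (quot (restr A S) I) X Y = coset A I (ladd A (qrep (restr A S) I X) (qrep (restr A S) I Y))"
  "lsmult (quot (restr A S) I) c X = coset A I (lsmult A c (qrep (restr A S) I X))"
  "lbr (quot (restr A S) I) X Y = coset A I (lbr A (qrep (restr A S) I X) (qrep (restr A S) I Y))"
  unfolding quot_def by (simp_all add: coset_restr lcar_restr, simp_all add: restr_def)

lemma iso_quot:
  fixes G :: "('k::field, 'g) lalg" and P1 :: "('k, 'a) lalg" and P2 :: "('k, 'b) lalg"
  assumes lG: "leibniz G" and l1: "leibniz P1" and l2: "leibniz P2"
    and h1: "hom P1 G \<psi>1" and h2: "hom P2 G \<psi>2"
    and sur2: "\<psi>2 ` lcar P2 = lcar G"
    and eq: "\<psi>1 ` ZLie P1 = \<psi>2 ` ZLie P2"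
  shows "isomorphic (quot (restr P1 (ZLie P1)) (kerh P1 G \<psi>1)) (quot (restr P2 (ZLie P2)) (kerh P2 G \<psi>2))"
proof -
  have vG: "vspace G" and v1: "vspace P1" and v2: "vspace P2" using lG l1 l2 lb_vs by blast+
  let ?m1 = "kerh P1 G \<psi>1" and ?m2 = "kerh P2 G \<psi>2" and ?Z1 = "ZLie P1" and ?Z2 = "ZLie P2"
  let ?Q1 = "quot (restr P1 ?Z1) ?m1" and ?Q2 = "quot (restr P2 ?Z2) ?m2"
  let ?q1 = "qrep (restr P1 ?Z1) ?m1" and ?q2 = "qrep (restr P2 ?Z2) ?m2"
  obtain s2 where sc2: "s2 ` lcar G \<subseteq> lcar P2" and inv2: "\<forall>x\<in>lcar G. \<psi>2 (s2 x) = x"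
    using section_ex[OF sur2] by blast
  have Z1c: "?Z1 \<subseteq> lcar P1" and Z2c: "?Z2 \<subseteq> lcar P2" unfolding ZLie_def by auto
  note cp1 = coset_psi[OF v1 vG h1] and cp2 = coset_psi[OF v2 vG h2]
  define h where "h W = coset P2 ?m2 (s2 (\<psi>1 (qrep P1 ?m1 W)))" for W
  have hb: "h (coset P1 ?m1 b) = coset P2 ?m2 (s2 (\<psi>1 b))" if b: "b \<in> lcar P1" for b
  proof -
    have r: "qrep P1 ?m1 (coset P1 ?m1 b) \<in> lcar P1"
      "coset P1 ?m1 (qrep P1 ?m1 (coset P1 ?m1 b)) = coset P1 ?m1 b" using qrep_gen[OF b] by auto
    have "\<psi>1 (qrep P1 ?m1 (coset P1 ?m1 b)) = \<psi>1 b" by (rule iffD1[OF cp1[OF r(1) b] r(2)])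
    then show ?thesis unfolding h_def by simp
  qed
  have Q1: "?q1 X \<in> ?Z1 \<and> X = coset P1 ?m1 (?q1 X)" if "X \<in> lcar ?Q1" for X
    using that unfolding quot_restr_ops by (rule qrep_restr)
  have Q2: "?q2 X \<in> ?Z2 \<and> X = coset P2 ?m2 (?q2 X)" if "X \<in> lcar ?Q2" for X
    using that unfolding quot_restr_ops by (rule qrep_restr)
  have Q1a: "?q1 X \<in> ?Z1" if "X \<in> lcar ?Q1" for X by (rule conjunct1[OF Q1[OF that]])
  have Q1b: "X = coset P1 ?m1 (?q1 X)" if "X \<in> lcar ?Q1" for X by (rule conjunct2[OF Q1[OF that]])
  have Q2a: "?q2 X \<in> ?Z2" if "X \<in> lcar ?Q2" for X by (rule conjunct1[OF Q2[OF that]])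
  have Q2b: "X = coset P2 ?m2 (?q2 X)" if "X \<in> lcar ?Q2" for X by (rule conjunct2[OF Q2[OF that]])
  have qc1: "?q1 X \<in> lcar P1" if "X \<in> lcar ?Q1" for X by (rule subsetD[OF Z1c Q1a[OF that]])
  have s2c: "s2 x \<in> lcar P2" if "x \<in> lcar G" for x using sc2 that by blast
  have hX: "h X = coset P2 ?m2 (s2 (\<psi>1 (?q1 X)))" if "X \<in> lcar ?Q1" for X
  proof -
    have "h X = h (coset P1 ?m1 (?q1 X))" by (rule arg_cong[OF Q1b[OF that]])
    also have "\<dots> = coset P2 ?m2 (s2 (\<psi>1 (?q1 X)))" by (rule hb[OF qc1[OF that]])
    finally show ?thesis .
  qed
  have hcar: "h X \<in> lcar ?Q2" if X: "X \<in> lcar ?Q1" for X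
  proof -
    have z: "?q1 X \<in> ?Z1" by (rule Q1a[OF X])
    then have "\<psi>1 (?q1 X) \<in> \<psi>2 ` ?Z2" using eq by blast
    then obtain z2 where z2: "z2 \<in> ?Z2" "\<psi>1 (?q1 X) = \<psi>2 z2" by blast
    have z2c: "z2 \<in> lcar P2" by (rule subsetD[OF Z2c z2(1)])
    have pg: "\<psi>1 (?q1 X) \<in> lcar G" by (rule hom_car[OF h1 qc1[OF X]])
    have "coset P2 ?m2 (s2 (\<psi>1 (?q1 X))) = coset P2 ?m2 z2"
      by (rule iffD2[OF cp2[OF s2c[OF pg] z2c]]) (use inv2 pg z2(2) in simp)
    then show ?thesis unfolding hX[OF X] quot_restr_ops using z2(1) by blast
  qed
  have q2h: "\<psi>2 (?q2 (h X)) = \<psi>1 (?q1 X)" if X: "X \<in> lcar ?Q1" for X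
  proof -
    have hq1: "?q2 (h X) \<in> lcar P2" by (rule subsetD[OF Z2c Q2a[OF hcar[OF X]]])
    have pg: "\<psi>1 (?q1 X) \<in> lcar G" by (rule hom_car[OF h1 qc1[OF X]])
    have "coset P2 ?m2 (?q2 (h X)) = h X" by (rule Q2b[OF hcar[OF X], symmetric])
    also have "\<dots> = coset P2 ?m2 (s2 (\<psi>1 (?q1 X)))" by (rule hX[OF X])
    finally have "\<psi>2 (?q2 (h X)) = \<psi>2 (s2 (\<psi>1 (?q1 X)))" by (rule iffD1[OF cp2[OF hq1 s2c[OF pg]]])
    then show ?thesis using inv2 pg by simp
  qed
  have qc2: "?q2 (h X) \<in> lcar P2" if "X \<in> lcar ?Q1" for X by (rule subsetD[OF Z2c Q2a[OF hcar[OF that]]])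
  have hom: "hom ?Q1 ?Q2 h"
    unfolding hom_def
  proof (intro conjI ballI allI)
    show "h ` lcar ?Q1 \<subseteq> lcar ?Q2" using hcar by blast
    show "h (ladd ?Q1 x y) = ladd ?Q2 (h x) (h y)" if x: "x \<in> lcar ?Q1" and y: "y \<in> lcar ?Q1" for x y
    proof -
      have a: "ladd P1 (?q1 x) (?q1 y) \<in> lcar P1" by (rule vs_add[OF v1 qc1[OF x] qc1[OF y]])
      have pg: "\<psi>1 (ladd P1 (?q1 x) (?q1 y)) \<in> lcar G" by (rule hom_car[OF h1 a])
      have "h (ladd ?Q1 x y) = coset P2 ?m2 (s2 (\<psi>1 (ladd P1 (?q1 x) (?q1 y))))"
        unfolding quot_restr_ops hb[OF a] ..
      also have "\<dots> = coset P2 ?m2 (ladd P2 (?q2 (h x)) (?q2 (h y)))"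
      proof (rule cp2[THEN iffD2])
        show "s2 (\<psi>1 (ladd P1 (?q1 x) (?q1 y))) \<in> lcar P2" by (rule s2c[OF pg])
        show "ladd P2 (?q2 (h x)) (?q2 (h y)) \<in> lcar P2" by (rule vs_add[OF v2 qc2[OF x] qc2[OF y]])
        show "\<psi>2 (s2 (\<psi>1 (ladd P1 (?q1 x) (?q1 y)))) = \<psi>2 (ladd P2 (?q2 (h x)) (?q2 (h y)))"
          unfolding hom_add[OF h2 qc2[OF x] qc2[OF y]] q2h[OF x] q2h[OF y] hom_add[OF h1 qc1[OF x] qc1[OF y], symmetric]
          using inv2 pg by simp
      qed
      also have "\<dots> = ladd ?Q2 (h x) (h y)" unfolding quot_restr_ops ..
      finally show ?thesis .
    qed
    show "h (lsmult ?Q1 c x) = lsmult ?Q2 c (h x)" if x: "x \<in> lcar ?Q1" for x c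
    proof -
      have a: "lsmult P1 c (?q1 x) \<in> lcar P1" by (rule vs_smult[OF v1 qc1[OF x]])
      have pg: "\<psi>1 (lsmult P1 c (?q1 x)) \<in> lcar G" by (rule hom_car[OF h1 a])
      have "h (lsmult ?Q1 c x) = coset P2 ?m2 (s2 (\<psi>1 (lsmult P1 c (?q1 x))))"
        unfolding quot_restr_ops hb[OF a] ..
      also have "\<dots> = coset P2 ?m2 (lsmult P2 c (?q2 (h x)))"
      proof (rule cp2[THEN iffD2])
        show "s2 (\<psi>1 (lsmult P1 c (?q1 x))) \<in> lcar P2" by (rule s2c[OF pg])
        show "lsmult P2 c (?q2 (h x)) \<in> lcar P2" by (rule vs_smult[OF v2 qc2[OF x]])
        show "\<psi>2 (s2 (\<psi>1 (lsmult P1 c (?q1 x)))) = \<psi>2 (lsmult P2 c (?q2 (h x)))"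
          unfolding hom_smult[OF h2 qc2[OF x]] q2h[OF x] hom_smult[OF h1 qc1[OF x], symmetric]
          using inv2 pg by simp
      qed
      also have "\<dots> = lsmult ?Q2 c (h x)" unfolding quot_restr_ops ..
      finally show ?thesis .
    qed
    show "h (lbr ?Q1 x y) = lbr ?Q2 (h x) (h y)" if x: "x \<in> lcar ?Q1" and y: "y \<in> lcar ?Q1" for x y
    proof -
      have a: "lbr P1 (?q1 x) (?q1 y) \<in> lcar P1" by (rule lb_br[OF l1 qc1[OF x] qc1[OF y]])
      have pg: "\<psi>1 (lbr P1 (?q1 x) (?q1 y)) \<in> lcar G" by (rule hom_car[OF h1 a])
      have "h (lbr ?Q1 x y) = coset P2 ?m2 (s2 (\<psi>1 (lbr P1 (?q1 x) (?q1 y))))"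
        unfolding quot_restr_ops hb[OF a] ..
      also have "\<dots> = coset P2 ?m2 (lbr P2 (?q2 (h x)) (?q2 (h y)))"
      proof (rule cp2[THEN iffD2])
        show "s2 (\<psi>1 (lbr P1 (?q1 x) (?q1 y))) \<in> lcar P2" by (rule s2c[OF pg])
        show "lbr P2 (?q2 (h x)) (?q2 (h y)) \<in> lcar P2" by (rule lb_br[OF l2 qc2[OF x] qc2[OF y]])
        show "\<psi>2 (s2 (\<psi>1 (lbr P1 (?q1 x) (?q1 y)))) = \<psi>2 (lbr P2 (?q2 (h x)) (?q2 (h y)))"
          unfolding hom_br[OF h2 qc2[OF x] qc2[OF y]] q2h[OF x] q2h[OF y] hom_br[OF h1 qc1[OF x] qc1[OF y], symmetric]
          using inv2 pg by simp
      qed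
      also have "\<dots> = lbr ?Q2 (h x) (h y)" unfolding quot_restr_ops ..
      finally show ?thesis .
    qed
  qed
  have inj: "inj_on h (lcar ?Q1)"
  proof (rule inj_onI)
    fix x y assume x: "x \<in> lcar ?Q1" and y: "y \<in> lcar ?Q1" and e: "h x = h y"
    have "\<psi>1 (?q1 x) = \<psi>1 (?q1 y)" using q2h[OF x] q2h[OF y] e by simp
    then have c: "coset P1 ?m1 (?q1 x) = coset P1 ?m1 (?q1 y)" by (rule iffD2[OF cp1[OF qc1[OF x] qc1[OF y]]])
    have "x = coset P1 ?m1 (?q1 x)" by (rule Q1b[OF x])
    also have "\<dots> = coset P1 ?m1 (?q1 y)" by (rule c)
    also have "\<dots> = y" by (rule Q1b[OF y, symmetric])
    finally show "x = y" .
  qed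
  have surj: "lcar ?Q2 \<subseteq> h ` lcar ?Q1"
  proof
    fix W assume W: "W \<in> lcar ?Q2"
    have z2: "?q2 W \<in> ?Z2" by (rule Q2a[OF W])
    have z2c: "?q2 W \<in> lcar P2" by (rule subsetD[OF Z2c z2])
    have "\<psi>2 (?q2 W) \<in> \<psi>1 ` ?Z1" using eq z2 by blast
    then obtain z1 where z1: "z1 \<in> ?Z1" "\<psi>2 (?q2 W) = \<psi>1 z1" by blast
    have z1c: "z1 \<in> lcar P1" using z1 Z1c by blast
    have X: "coset P1 ?m1 z1 \<in> lcar ?Q1" unfolding quot_restr_ops using z1(1) by blast
    have pg: "\<psi>1 z1 \<in> lcar G" by (rule hom_car[OF h1 z1c])
    have "h (coset P1 ?m1 z1) = coset P2 ?m2 (s2 (\<psi>1 z1))" by (rule hb[OF z1c])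
    also have "\<dots> = coset P2 ?m2 (?q2 W)"
      by (rule iffD2[OF cp2[OF s2c[OF pg] z2c]]) (use inv2 pg z1(2) in simp)
    also have "\<dots> = W" by (rule Q2b[OF W, symmetric])
    finally show "W \<in> h ` lcar ?Q1" using X by (metis imageI)
  qed
  have "bij_betw h (lcar ?Q1) (lcar ?Q2)"
  proof -
    have "h ` lcar ?Q1 = lcar ?Q2" using hcar surj by blast
    then show ?thesis unfolding bij_betw_def using inj by blast
  qed
  then show ?thesis unfolding isomorphic_def iso_def using hom by blast
qed

theorem mainTheorem18:
  fixes g :: "('k::field, 'g) lalg"
    and p1 :: "('k, 'a) lalg" and \<psi>1 :: "'a \<Rightarrow> 'g"
    and p2 :: "('k, 'b) lalg" and \<psi>2 :: "'b \<Rightarrow> 'g"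
  assumes "(2::'k) \<noteq> 0"
    and "leibniz g" and "fin_dim g" and "fin_dim (Mult g)"
    and "lie_stem_cover p1 g \<psi>1"
    and "lie_stem_cover p2 g \<psi>2"
  shows "isomorphic (quot (restr p1 (ZLie p1)) (kerh p1 g \<psi>1))
                    (quot (restr p2 (ZLie p2)) (kerh p2 g \<psi>2))"
proof -
  have c1: "lie_stem_cover p1 g \<psi>1" and c2: "lie_stem_cover p2 g \<psi>2" using assms by auto
  have eq: "\<psi>1 ` ZLie p1 = \<psi>2 ` ZLie p2"
    using main_incl[OF c1 c2] main_incl[OF c2 c1] by blast
  have lG: "leibniz g" and l1: "leibniz p1" and h1: "hom p1 g \<psi>1"
    using lsc_lG[OF c1] lsc_lP[OF c1] lsc_hom[OF c1] by auto
  have l2: "leibniz p2" and h2: "hom p2 g \<psi>2" and sur2: "\<psi>2 ` lcar p2 = lcar g"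
    using lsc_lP[OF c2] lsc_hom[OF c2] lsc_sur[OF c2] by auto
  show ?thesis by (rule iso_quot[OF lG l1 l2 h1 h2 sur2 eq])
qed


end
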